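(* Let $\mathbf{U}$ be a $p\times p$ orthogonal matrix, $\mathbf{\Lambda}$ a $p\times p$ positive semi-definite diagonal matrix, $\mathbf{\Sigma}=\mathbf{U}\mathbf{\Lambda}\mathbf{U}^{\top}$, $R\ge0$, and let $\{\boldsymbol{Z}_{i};i=1,\ldots,n\}$ be i.i.d. $p$-dimensional random vectors with $\mathbb{E}[\boldsymbol{Z}_{i}\boldsymbol{Z}_{i}^{\top}]=\mathbf{I}_{p}$ such that $(\boldsymbol{Z}_{1},\ldots,\boldsymbol{Z}_{n})$ satisfies the concentration property with some constant $K>0$. Then for all $t>0$, $\boldsymbol{\theta}\in B[R]$ and $\boldsymbol{z}=(\boldsymbol{z}_{1},\ldots,\boldsymbol{z}_{n})\in\mathbb{R}^{np}$, $$\left\|\nabla_{\boldsymbol{z}}G_{t}^{\boldsymbol{\theta}}(\boldsymbol{z})\right\|\le\sqrt{\frac{2t\|\mathbf{\Sigma}\|}{\pi n}}\left(4+\sqrt{\frac{R^{2}}{16n}\sum_{i=1}^{n}\langle\mathbf{\Lambda}\boldsymbol{z}_{i},\boldsymbol{z}_{i}\rangle}\right).$$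
   Context: $\sigma(x)=1/(1+e^{-x})$. $B[R]=\{\boldsymbol{\theta}\in\mathbb{R}^{p}:\|\boldsymbol{\theta}\|\le R\}$. $\{\boldsymbol{W}_{s};s\ge0\}$ is a $p$-dimensional standard Brownian motion started at $0$, independent of the $\boldsymbol{Z}_i$, and $\tilde{\boldsymbol{W}}_{s}^{\boldsymbol{\theta}}=\mathbf{\Lambda}^{1/2}\mathbf{U}^{\top}(\boldsymbol{\theta}+\boldsymbol{W}_{s})$. For $\boldsymbol{z}=(\boldsymbol{z}_{1},\ldots,\boldsymbol{z}_{n})\in\mathbb{R}^{np}$, $$G_{t}^{\boldsymbol{\theta}}(\boldsymbol{z})=\frac{1}{2n}\sum_{i=1}^{n}\int_{0}^{t}\mathbb{E}_{\boldsymbol{W}}\left[\sigma(1-\sigma)(\langle\tilde{\boldsymbol{W}}_{s}^{\boldsymbol{\theta}},\boldsymbol{z}_{i}\rangle)\right]\langle\mathbf{\Lambda}\boldsymbol{z}_{i},\boldsymbol{z}_{i}\rangle\,\mathrm{d}s-\frac{1}{2n}\sum_{i=1}^{n}\int_{0}^{t}\mathbb{E}_{\boldsymbol{W},\boldsymbol{Z}}\left[\sigma(1-\sigma)(\langle\tilde{\boldsymbol{W}}_{s}^{\boldsymbol{\theta}},\boldsymbol{Z}_{i}\rangle)\langle\mathbf{\Lambda}\boldsymbol{Z}_{i},\boldsymbol{Z}_{i}\rangle\right]\mathrm{d}s,$$ where $\sigma(1-\sigma)(x)=\sigma(x)(1-\sigma(x))$ (the second term does not depend on $\boldsymbol{z}$).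 $\nabla_{\boldsymbol{z}}$ is the gradient in $\boldsymbol{z}\in\mathbb{R}^{np}$, $\|\cdot\|$ the Euclidean norm on vectors and spectral norm on matrices. The concentration property with constant $K$ for an $\mathbb{R}^{d}$-valued $\boldsymbol{\zeta}$: for every $1$-Lipschitz $\varphi$, $\mathbb{E}|\varphi(\boldsymbol{\zeta})|<\infty$ and $\Pr(|\varphi(\boldsymbol{\zeta})-\mathbb{E}\varphi(\boldsymbol{\zeta})|\ge u)\le2\exp(-u^{2}/K^{2})$ for all $u>0$. *)

theory Defs
  imports "HOL-Probability.Probability"
begin

definition sigmoid :: "real \<Rightarrow> real" where
  "sigmoid x = 1 / (1 + exp (- x))"

definition sigmoid_deriv :: "real \<Rightarrow> real" where
  "sigmoid_deriv x = sigmoid x * (1 - sigmoid x)"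

text \<open>Standard Gaussian measure on R^p (the law of W_1); W_s has the law of sqrt s * g.\<close>
definition std_gauss :: "(real^'p) measure" where
  "std_gauss = density lborel
     (\<lambda>x. ennreal ((2 * pi) powr (- real CARD('p) / 2) * exp (- (norm x)\<^sup>2 / 2)))"

definition diag_sqrt :: "real^'p^'p \<Rightarrow> real^'p^'p" where
  "diag_sqrt L = (\<chi> i j. if i = j then sqrt (L $ i $ i) else 0)"

text \<open>tilde W_s^theta = Lambda^(1/2) U^T (theta + W_s), with w the value of W_s.\<close>
definition Wtilde :: "real^'p^'p \<Rightarrow> real^'p^'p \<Rightarrow> real^'p \<Rightarrow> real^'p \<Rightarrow> real^'p" where
  "Wtilde U L \<theta> w = diag_sqrt L *v (transpose U *v (\<theta> + w))"

definition G_fun ::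
  "real^'p^'p \<Rightarrow> real^'p^'p \<Rightarrow> 'a measure \<Rightarrow> ('n::finite \<Rightarrow> 'a \<Rightarrow> real^'p)
   \<Rightarrow> real \<Rightarrow> real^'p \<Rightarrow> real^'p^'n \<Rightarrow> real" where
  "G_fun U L M Z t \<theta> z =
     1 / (2 * real CARD('n)) * (\<Sum>i\<in>UNIV.
        (LINT s:{0..t}|lborel.
           (\<integral>g. sigmoid_deriv (Wtilde U L \<theta> (sqrt s *\<^sub>R g) \<bullet> z $ i) \<partial>std_gauss)
           * ((L *v z $ i) \<bullet> z $ i)))
   - 1 / (2 * real CARD('n)) * (\<Sum>i\<in>UNIV.
        (LINT s:{0..t}|lborel.
           (\<integral>\<omega>. (\<integral>g. sigmoid_deriv (Wtilde U L \<theta> (sqrt s *\<^sub>R g) \<bullet> Z i \<omega>)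
                      * ((L *v Z i \<omega>) \<bullet> Z i \<omega>) \<partial>std_gauss) \<partial>M)))"

definition concentration_property :: "'a measure \<Rightarrow> ('a \<Rightarrow> 'b::metric_space) \<Rightarrow> real \<Rightarrow> bool" where
  "concentration_property M X K \<longleftrightarrow>
     (\<forall>\<phi> :: 'b \<Rightarrow> real. (\<forall>x y. \<bar>\<phi> x - \<phi> y\<bar> \<le> dist x y) \<longrightarrow>
        integrable M (\<lambda>\<omega>. \<phi> (X \<omega>)) \<and>
        (\<forall>u>0. measure M {\<omega>\<in>space M. \<bar>\<phi> (X \<omega>) - (\<integral>\<omega>'. \<phi> (X \<omega>') \<partial>M)\<bar> \<ge> u}
                 \<le> 2 * exp (- u\<^sup>2 / K\<^sup>2)))"

end

theory Submission
  imports Defs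
begin

lemma sigmoid_pos: "0 < sigmoid x" and sigmoid_lt1: "sigmoid x < 1"
  unfolding sigmoid_def by (auto simp: divide_simps add_pos_pos)

lemma sigmoid_deriv_alt: "sigmoid_deriv x = exp (-x) / (1 + exp (-x))^2"
proof -
  have "1 + exp (-x) > 0" by (simp add: add_pos_pos)
  then show ?thesis unfolding sigmoid_deriv_def sigmoid_def by (simp add: field_simps power2_eq_square)
qed

lemma has_deriv_sigmoid: "(sigmoid has_real_derivative sigmoid_deriv x) (at x)"
proof -
  have "((\<lambda>x. 1 / (1 + exp (-x))) has_real_derivative
     (- (- exp (-x)) / (1 + exp (-x))^2)) (at x)"
    by (auto intro!: derivative_eq_intros simp: power2_eq_square add_pos_pos)
       (metis add_pos_pos exp_gt_zero less_irrefl zero_less_one)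
  then show ?thesis unfolding sigmoid_def[abs_def] sigmoid_deriv_alt by simp
qed

definition sdd :: "real \<Rightarrow> real" where
  "sdd x = sigmoid_deriv x * (1 - 2 * sigmoid x)"

definition sddd :: "real \<Rightarrow> real" where
  "sddd x = sigmoid_deriv x * (1 - 2 * sigmoid x)^2 - 2 * (sigmoid_deriv x)^2"

lemma has_deriv_sd: "(sigmoid_deriv has_real_derivative sdd x) (at x)"
proof -
  have "((\<lambda>x. sigmoid x * (1 - sigmoid x)) has_real_derivative
     (sigmoid_deriv x * (1 - sigmoid x) + sigmoid x * (- sigmoid_deriv x))) (at x)"
    by (auto intro!: derivative_eq_intros has_deriv_sigmoid)
  then show ?thesis unfolding sigmoid_deriv_def[abs_def] sdd_def
    by (simp add: sigmoid_deriv_def algebra_simps)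
qed

lemma has_deriv_sdd: "(sdd has_real_derivative sddd x) (at x)"
proof -
  have "((\<lambda>x. sigmoid_deriv x * (1 - 2 * sigmoid x)) has_real_derivative
     (sdd x * (1 - 2 * sigmoid x) + sigmoid_deriv x * (- 2 * sigmoid_deriv x))) (at x)"
    by (auto intro!: derivative_eq_intros has_deriv_sigmoid has_deriv_sd)
  then show ?thesis unfolding sdd_def[abs_def] sddd_def
    by (simp add: sdd_def algebra_simps power2_eq_square)
qed

lemma sd_pos: "0 < sigmoid_deriv x"
  unfolding sigmoid_deriv_def using sigmoid_pos[of x] sigmoid_lt1[of x] by simp

lemma sd_le: "sigmoid_deriv x \<le> 1/4"
proof -
  have "0 \<le> (sigmoid x - 1/2)^2" by simp
  then show ?thesis unfolding sigmoid_deriv_def by (simp add: power2_eq_square algebra_simps)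
qed

lemma abs_sd_le: "\<bar>sigmoid_deriv x\<bar> \<le> 1/4"
  using sd_pos[of x] sd_le[of x] by simp

lemma abs_1m2s: "\<bar>1 - 2 * sigmoid x\<bar> \<le> 1"
  using sigmoid_pos[of x] sigmoid_lt1[of x] by simp

lemma abs_sdd_le: "\<bar>sdd x\<bar> \<le> 1/4"
proof -
  have "\<bar>sdd x\<bar> = sigmoid_deriv x * \<bar>1 - 2 * sigmoid x\<bar>"
    unfolding sdd_def using sd_pos[of x] by (simp add: abs_mult)
  also have "\<dots> \<le> 1/4 * 1"
    by (rule mult_mono) (use sd_le[of x] abs_1m2s[of x] sd_pos[of x] in auto)
  finally show ?thesis by simp
qed

lemma abs_sddd_le: "\<bar>sddd x\<bar> \<le> 1/4"
proof -
  have a: "0 \<le> sigmoid_deriv x * (1 - 2 * sigmoid x)^2"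
    using sd_pos[of x] by simp
  have "(1 - 2 * sigmoid x)^2 \<le> 1^2"
    using abs_1m2s[of x] by (metis abs_le_square_iff abs_one)
  then have b: "sigmoid_deriv x * (1 - 2 * sigmoid x)^2 \<le> 1/4 * 1"
    using sd_pos[of x] sd_le[of x] by (intro mult_mono) auto
  have c: "0 \<le> 2 * (sigmoid_deriv x)^2" by simp
  have "sigmoid_deriv x * sigmoid_deriv x \<le> 1/4 * (1/4)"
    using sd_pos[of x] sd_le[of x] by (intro mult_mono) auto
  then have d: "2 * (sigmoid_deriv x)^2 \<le> 1/4" by (simp add: power2_eq_square)
  show ?thesis unfolding sddd_def using a b c d by linarith
qed

lemma lip_from_deriv:
  fixes f f' :: "real \<Rightarrow> real"
  assumes d: "\<And>x. (f has_real_derivative f' x) (at x)" and b: "\<And>x. \<bar>f' x\<bar> \<le> B"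
  shows "\<bar>f a - f b\<bar> \<le> B * \<bar>a - b\<bar>"
proof -
  have main: "\<bar>f v - f u\<bar> \<le> B * \<bar>v - u\<bar>" if uv: "u < v" for u v
  proof -
    obtain z where "f v - f u = (v - u) * f' z"
      using MVT2[OF uv, of f f'] d by blast
    then have "\<bar>f v - f u\<bar> = \<bar>v - u\<bar> * \<bar>f' z\<bar>" by (simp add: abs_mult)
    also have "\<dots> \<le> \<bar>v - u\<bar> * B" by (rule mult_left_mono[OF b]) simp
    finally show ?thesis by (simp add: mult.commute)
  qed
  consider "a < b" | "a = b" | "b < a" by linarith
  then show ?thesis
    by cases (use main[of a b] main[of b a] in \<open>auto simp: abs_minus_commute\<close>)
qed

lemma sd_lip: "\<bar>sigmoid_deriv a - sigmoid_deriv b\<bar> \<le> 1/4 * \<bar>a - b\<bar>"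
  by (rule lip_from_deriv[OF has_deriv_sd abs_sdd_le])

lemma sdd_lip: "\<bar>sdd a - sdd b\<bar> \<le> 1/4 * \<bar>a - b\<bar>"
  by (rule lip_from_deriv[OF has_deriv_sdd abs_sddd_le])

lemma sd_taylor: "\<bar>sigmoid_deriv (a + h) - sigmoid_deriv a - h * sdd a\<bar> \<le> h^2 / 4"
proof -
  define g where "g u = sigmoid_deriv (a + u) - sigmoid_deriv a - u * sdd a" for u
  have dg: "(g has_real_derivative (sdd (a + u) - sdd a)) (at u)" for u
    unfolding g_def
    by (auto intro!: derivative_eq_intros DERIV_chain2[OF has_deriv_sd])
  have main: "\<bar>g v - g u\<bar> \<le> \<bar>v - u\<bar> * (max \<bar>u\<bar> \<bar>v\<bar> / 4)" if uv: "u < v" for u v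
  proof -
    obtain z where z: "u < z" "z < v" "g v - g u = (v - u) * (sdd (a + z) - sdd a)"
      using MVT2[OF uv, of g "\<lambda>u. sdd (a + u) - sdd a"] dg by blast
    have "\<bar>sdd (a + z) - sdd a\<bar> \<le> 1/4 * \<bar>z\<bar>" using sdd_lip[of "a+z" a] by simp
    also have "\<dots> \<le> max \<bar>u\<bar> \<bar>v\<bar> / 4" using z by auto
    finally have "\<bar>sdd (a + z) - sdd a\<bar> \<le> max \<bar>u\<bar> \<bar>v\<bar> / 4" .
    then have "\<bar>v - u\<bar> * \<bar>sdd (a + z) - sdd a\<bar> \<le> \<bar>v - u\<bar> * (max \<bar>u\<bar> \<bar>v\<bar> / 4)"
      by (rule mult_left_mono) simp
    then show ?thesis using z(3) by (simp add: abs_mult)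
  qed
  have g0: "g 0 = 0" by (simp add: g_def)
  consider "0 < h" | "h = 0" | "h < 0" by linarith
  then have "\<bar>g h\<bar> \<le> h^2 / 4"
  proof cases
    case 1 then show ?thesis using main[of 0 h] g0 by (simp add: power2_eq_square)
  next
    case 2 then show ?thesis using g0 by simp
  next
    case 3 then show ?thesis using main[of h 0] g0 by (simp add: power2_eq_square)
  qed
  then show ?thesis by (simp add: g_def)
qed

definition stdN :: "real measure" where
  "stdN = density lborel (\<lambda>x. ennreal (std_normal_density x))"

lemma prob_space_stdN: "prob_space stdN"
  unfolding stdN_def by (rule prob_space_normal_density) simp

lemma sets_stdN[simp, measurable_cong]: "sets stdN = sets borel"
  unfolding stdN_def by simp

lemma space_stdN[simp]: "space stdN = UNIV"
  unfolding stdN_def by simp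

lemma indicator_PiE_prod:
  assumes "finite I" "f \<in> Pi\<^sub>E I (\<lambda>_. UNIV)"
  shows "indicator (Pi\<^sub>E I A) f = (\<Prod>i\<in>I. indicator (A i) (f i) :: ennreal)"
  using assms by (auto simp: indicator_def PiE_iff prod.neutral assms)

lemma PiM_density_prod:
  fixes I :: "'i set" assumes fin: "finite I"
  shows "density (PiM I (\<lambda>_. lborel)) (\<lambda>f. \<Prod>i\<in>I. ennreal (std_normal_density (f i)))
       = PiM I (\<lambda>_. stdN)"
proof -
  interpret S: product_sigma_finite "\<lambda>_. stdN"
    by (simp add: product_sigma_finite_def prob_space_imp_sigma_finite[OF prob_space_stdN])
  interpret L: product_sigma_finite "\<lambda>_. lborel :: real measure"
    by (simp add: product_sigma_finite_def sigma_finite_lborel)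
  show ?thesis
  proof (rule S.PiM_eqI[OF fin])
    show "sets (density (PiM I (\<lambda>_. lborel)) (\<lambda>f. \<Prod>i\<in>I. ennreal (std_normal_density (f i))))
        = sets (PiM I (\<lambda>_. stdN))"
      by (simp cong: sets_PiM_cong)
  next
    fix A assume A: "\<And>i. i \<in> I \<Longrightarrow> A i \<in> sets stdN"
    have Ab[measurable]: "\<And>i. i \<in> I \<Longrightarrow> A i \<in> sets borel" using A by simp
    have PA: "Pi\<^sub>E I A \<in> sets (PiM I (\<lambda>_. lborel))"
      using A by (intro sets_PiM_I_finite fin) auto
    have "emeasure (density (PiM I (\<lambda>_. lborel)) (\<lambda>f. \<Prod>i\<in>I. ennreal (std_normal_density (f i)))) (Pi\<^sub>E I A)
      = (\<integral>\<^sup>+f. (\<Prod>i\<in>I. ennreal (std_normal_density (f i))) * indicator (Pi\<^sub>E I A) f \<partial>PiM I (\<lambda>_. lborel))"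
      using PA by (subst emeasure_density) auto
    also have "\<dots> = (\<integral>\<^sup>+f. (\<Prod>i\<in>I. ennreal (std_normal_density (f i)) * indicator (A i) (f i)) \<partial>PiM I (\<lambda>_. lborel))"
      by (intro nn_integral_cong)
         (simp add: indicator_PiE_prod[OF fin] space_PiM prod.distrib)
    also have "\<dots> = (\<Prod>i\<in>I. (\<integral>\<^sup>+x. ennreal (std_normal_density x) * indicator (A i) x \<partial>lborel))"
      using Ab by (intro L.product_nn_integral_prod fin) auto
    also have "\<dots> = (\<Prod>i\<in>I. emeasure stdN (A i))"
      using Ab unfolding stdN_def by (intro prod.cong refl) (simp add: emeasure_density)
    finally show "emeasure (density (PiM I (\<lambda>_. lborel)) (\<lambda>f. \<Prod>i\<in>I. ennreal (std_normal_density (f i)))) (Pi\<^sub>E I A)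
      = (\<Prod>i\<in>I. emeasure stdN (A i))" .
  qed
qed

lemma powr_gauss_const: "(2 * pi) powr (- real n / 2) = (1 / sqrt (2 * pi)) ^ n"
proof -
  have p: "0 < (2 * pi :: real)" by simp
  have "(2 * pi) powr (- (1/2)) = 1 / sqrt (2 * pi)"
    by (simp only: powr_minus_divide powr_half_sqrt[OF less_imp_le[OF p]])
  then have "(1 / sqrt (2 * pi)) ^ n = ((2 * pi) powr (- (1/2))) ^ n"
    by simp
  also have "\<dots> = ((2 * pi) powr (- (1/2))) powr (real n)"
    by (rule powr_realpow[symmetric]) simp
  also have "\<dots> = (2 * pi) powr (- real n / 2)"
    by (simp only: powr_powr) (simp add: field_simps)
  finally show ?thesis by simp
qed

lemma Phi_inner_Basis:
  fixes f :: "real^'p \<Rightarrow> real"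
  assumes "b \<in> Basis"
  shows "(\<Sum>c\<in>Basis. f c *\<^sub>R c) \<bullet> b = f b"
  using assms by (simp add: inner_sum_left inner_Basis if_distrib sum.delta cong: if_cong)

lemma norm_sq_Basis: "(norm (x :: real^'p))^2 = (\<Sum>b\<in>Basis. (x \<bullet> b)^2)"
  by (subst power2_norm_eq_inner, subst euclidean_inner) (simp add: power2_eq_square)

lemma std_gauss_eq:
  "(std_gauss :: (real^'p) measure) =
     distr (PiM (Basis :: (real^'p) set) (\<lambda>_. stdN)) borel (\<lambda>f. \<Sum>b\<in>Basis. f b *\<^sub>R b)"
proof -
  define h :: "real^'p \<Rightarrow> ennreal" where
    "h x = ennreal ((2 * pi) powr (- real CARD('p) / 2) * exp (- (norm x)\<^sup>2 / 2))" for x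
  define \<Phi> :: "(real^'p \<Rightarrow> real) \<Rightarrow> real^'p" where "\<Phi> f = (\<Sum>b\<in>Basis. f b *\<^sub>R b)" for f
  have hm[measurable]: "h \<in> borel_measurable borel" unfolding h_def by measurable
  have \<Phi>m[measurable]: "\<Phi> \<in> measurable (PiM Basis (\<lambda>_. lborel)) borel"
    unfolding \<Phi>_def by measurable
  have "std_gauss = density lborel h" unfolding std_gauss_def h_def ..
  also have "\<dots> = density (distr (PiM Basis (\<lambda>_. lborel)) borel \<Phi>) h"
    unfolding \<Phi>_def by (subst lborel_eq) simp
  also have "\<dots> = distr (density (PiM Basis (\<lambda>_. lborel)) (\<lambda>f. h (\<Phi> f))) borel \<Phi>"
    by (rule density_distr) auto
  also have "density (PiM Basis (\<lambda>_. lborel)) (\<lambda>f. h (\<Phi> f))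
      = density (PiM Basis (\<lambda>_. lborel)) (\<lambda>f. \<Prod>b\<in>Basis. ennreal (std_normal_density (f b)))"
  proof (rule density_cong)
    show "(\<lambda>f. h (\<Phi> f)) \<in> borel_measurable (PiM Basis (\<lambda>_. lborel))" by measurable
    show "AE f in PiM Basis (\<lambda>_. lborel). h (\<Phi> f) = (\<Prod>b\<in>Basis. ennreal (std_normal_density (f b)))"
    proof (rule AE_I2)
      fix f :: "real^'p \<Rightarrow> real"
      have n: "(norm (\<Phi> f))^2 = (\<Sum>b\<in>Basis. (f b)\<^sup>2)"
        unfolding norm_sq_Basis \<Phi>_def by (intro sum.cong refl) (simp add: Phi_inner_Basis)
      have "(2 * pi) powr (- real CARD('p) / 2) * exp (- (norm (\<Phi> f))\<^sup>2 / 2)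
          = (\<Prod>b\<in>(Basis::(real^'p) set). 1 / sqrt (2 * pi)) * (\<Prod>b\<in>Basis. exp (- (f b)\<^sup>2 / 2))"
        unfolding n powr_gauss_const
        by (simp add: exp_sum[symmetric] sum_negf sum_divide_distrib)
      also have "\<dots> = (\<Prod>b\<in>Basis. std_normal_density (f b))"
        unfolding std_normal_density_def prod.distrib ..
      finally show "h (\<Phi> f) = (\<Prod>b\<in>Basis. ennreal (std_normal_density (f b)))"
        unfolding h_def by (simp add: prod_ennreal)
    qed
    show "(\<lambda>f. \<Prod>b\<in>Basis. ennreal (std_normal_density (f b))) \<in> borel_measurable (PiM Basis (\<lambda>_. lborel))"
      by measurable
  qed
  also have "\<dots> = PiM Basis (\<lambda>_. stdN)"
    by (rule PiM_density_prod) simp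
  finally show ?thesis unfolding \<Phi>_def .
qed

lemma prob_space_PiN: "prob_space (PiM (Basis :: (real^'p) set) (\<lambda>_. stdN))"
  by (rule prob_space_PiM) (rule prob_space_stdN)

lemma prob_space_std_gauss: "prob_space (std_gauss :: (real^'p) measure)"
proof -
  interpret P: prob_space "PiM (Basis :: (real^'p) set) (\<lambda>_. stdN)" by (rule prob_space_PiN)
  have m: "(\<lambda>f. \<Sum>b\<in>(Basis :: (real^'p) set). f b *\<^sub>R b) \<in> measurable (PiM Basis (\<lambda>_. stdN)) borel"
    by measurable
  show ?thesis unfolding std_gauss_eq by (rule P.prob_space_distr[OF m])
qed

lemma indep_coords:
  "prob_space.indep_vars (PiM (Basis :: (real^'p) set) (\<lambda>_. stdN)) (\<lambda>_. borel) (\<lambda>b x. x b) Basis"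
proof -
  let ?P = "PiM (Basis :: (real^'p) set) (\<lambda>_. stdN)"
  interpret P: prob_space ?P by (rule prob_space_PiN)
  have comp: "distr ?P borel (\<lambda>x. x b) = stdN" if "b \<in> Basis" for b
  proof -
    have "distr ?P borel (\<lambda>x. x b) = distr ?P stdN (\<lambda>x. x b)"
      by (rule distr_cong) auto
    also have "\<dots> = stdN"
      by (rule distr_PiM_component) (use that prob_space_stdN in auto)
    finally show ?thesis .
  qed
  have "distr ?P (PiM Basis (\<lambda>_. borel)) (\<lambda>x. \<lambda>b\<in>Basis. x b) = distr ?P (PiM Basis (\<lambda>_. borel)) (\<lambda>x. x)"
    by (rule distr_cong) (auto simp: space_PiM PiE_def extensional_restrict)
  also have "\<dots> = ?P"
    by (rule distr_id2) (simp cong: sets_PiM_cong)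
  also have "\<dots> = PiM Basis (\<lambda>b. distr ?P borel (\<lambda>x. x b))"
    by (rule PiM_cong) (simp_all add: comp)
  finally show ?thesis
    by (subst P.indep_vars_iff_distr_eq_PiM') (auto simp: nonempty_Basis)
qed

lemma gauss_proj:
  fixes w :: "real^'p" and f :: "real \<Rightarrow> real"
  assumes fm[measurable]: "f \<in> borel_measurable borel"
  shows "(\<integral>g. f (g \<bullet> w) \<partial>std_gauss) = (\<integral>x. f (norm w * x) \<partial>stdN)"
proof -
  let ?P = "PiM (Basis :: (real^'p) set) (\<lambda>_. stdN)"
  interpret P: prob_space ?P by (rule prob_space_PiN)
  interpret S: prob_space stdN by (rule prob_space_stdN)
  have Phim[measurable]: "(\<lambda>f. \<Sum>b\<in>(Basis :: (real^'p) set). f b *\<^sub>R b) \<in> measurable ?P borel"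
    by measurable
  have "(\<integral>g. f (g \<bullet> w) \<partial>std_gauss) = (\<integral>x. f ((\<Sum>b\<in>Basis. x b *\<^sub>R b) \<bullet> w) \<partial>?P)"
    unfolding std_gauss_eq by (rule integral_distr) auto
  also have "\<dots> = (\<integral>x. f (\<Sum>b\<in>Basis. (b \<bullet> w) * x b) \<partial>?P)"
    by (intro Bochner_Integration.integral_cong refl arg_cong[where f=f])
       (simp add: inner_sum_left mult.commute)
  finally have L: "(\<integral>g. f (g \<bullet> w) \<partial>std_gauss) = (\<integral>x. f (\<Sum>b\<in>Basis. (b \<bullet> w) * x b) \<partial>?P)" .
  show ?thesis
  proof (cases "w = 0")
    case True
    then show ?thesis unfolding L using S.prob_space by (simp add: P.prob_space)
  next
    case False
    define I where "I = {b\<in>(Basis :: (real^'p) set). b \<bullet> w \<noteq> 0}"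
    have I_sub: "I \<subseteq> Basis" and finI: "finite I" unfolding I_def by auto
    have I_ne: "I \<noteq> {}"
    proof
      assume "I = {}"
      then have "\<forall>b\<in>Basis. w \<bullet> b = 0" unfolding I_def by (auto simp: inner_commute)
      then have "w = 0" by (simp add: euclidean_all_zero_iff)
      with False show False by simp
    qed
    have sumI: "(\<Sum>b\<in>Basis. (b \<bullet> w) * x b) = (\<Sum>b\<in>I. (b \<bullet> w) * x b)" for x :: "real^'p \<Rightarrow> real"
      by (rule sum.mono_neutral_right) (auto simp: I_def)
    have sq: "(\<Sum>b\<in>I. (\<bar>b \<bullet> w\<bar>)\<^sup>2) = (norm w)\<^sup>2"
    proof -
      have "(\<Sum>b\<in>I. (\<bar>b \<bullet> w\<bar>)\<^sup>2) = (\<Sum>b\<in>Basis. (w \<bullet> b)\<^sup>2)"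
        by (rule sum.mono_neutral_cong_left) (auto simp: I_def inner_commute)
      then show ?thesis by (simp add: norm_sq_Basis)
    qed
    have ind: "P.indep_vars (\<lambda>_. borel) (\<lambda>b x. (b \<bullet> w) * x b) I"
      using P.indep_vars_compose2[OF indep_coords, of "\<lambda>b y. (b \<bullet> w) * y" "\<lambda>_. borel"]
      by (intro P.indep_vars_subset[OF _ I_sub]) auto
    have coord: "distributed ?P lborel (\<lambda>x. x b) (\<lambda>x. ennreal (std_normal_density x))"
      if "b \<in> Basis" for b
    proof -
      have "distr ?P lborel (\<lambda>x. x b) = distr ?P stdN (\<lambda>x. x b)"
        by (rule distr_cong) auto
      also have "\<dots> = stdN"
        by (rule distr_PiM_component) (use that prob_space_stdN in auto)
      finally show ?thesis unfolding distributed_def stdN_def using that by auto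
    qed
    have each: "distributed ?P lborel (\<lambda>x. (b \<bullet> w) * x b) (\<lambda>x. ennreal (normal_density 0 \<bar>b \<bullet> w\<bar> x))"
      if "b \<in> I" for b
      using P.normal_density_affine[OF coord[of b], where \<alpha>="b \<bullet> w" and \<beta>=0] that unfolding I_def by simp
    have D1: "distributed ?P lborel (\<lambda>x. \<Sum>b\<in>I. (b \<bullet> w) * x b) (\<lambda>x. ennreal (normal_density 0 (norm w) x))"
      using P.sum_indep_normal[OF finI I_ne ind, of "\<lambda>b. \<bar>b \<bullet> w\<bar>" "\<lambda>_. 0"] each
      unfolding sq by (simp add: I_def)
    have idd: "distributed stdN lborel (\<lambda>x. x) (\<lambda>x. ennreal (std_normal_density x))"
      unfolding distributed_def by (simp add: distr_id2 stdN_def)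
    have D2: "distributed stdN lborel (\<lambda>x. norm w * x) (\<lambda>x. ennreal (normal_density 0 (norm w) x))"
      using S.normal_density_affine[OF idd, where \<alpha>="norm w" and \<beta>=0] False by simp
    have "(\<integral>x. f (\<Sum>b\<in>Basis. (b \<bullet> w) * x b) \<partial>?P) = (\<integral>x. f (\<Sum>b\<in>I. (b \<bullet> w) * x b) \<partial>?P)"
      by (simp add: sumI)
    also have "\<dots> = (\<integral>y. f y \<partial>distr ?P lborel (\<lambda>x. \<Sum>b\<in>I. (b \<bullet> w) * x b))"
      by (rule integral_distr[symmetric]) (use D1 in \<open>auto simp: distributed_def\<close>)
    also have "\<dots> = (\<integral>y. f y \<partial>distr stdN lborel (\<lambda>x. norm w * x))"
      using D1 D2 by (simp add: distributed_def)
    also have "\<dots> = (\<integral>x. f (norm w * x) \<partial>stdN)"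
      by (rule integral_distr) (use D2 in \<open>auto simp: distributed_def\<close>)
    finally show ?thesis unfolding L .
  qed
qed

lemma sigmoid_minus: "sigmoid (- x) = 1 - sigmoid x"
proof -
  have "1 + exp (-x) > 0" "1 + exp x > 0" by (simp_all add: add_pos_pos)
  then show ?thesis unfolding sigmoid_def
    by (simp add: field_simps exp_minus)
qed

lemma sd_even: "sigmoid_deriv (- x) = sigmoid_deriv x"
  unfolding sigmoid_deriv_def sigmoid_minus by simp

lemma sdd_odd: "sdd (- x) = - sdd x"
  unfolding sdd_def sd_even sigmoid_minus by (simp add: algebra_simps)

lemma sdd_nonpos: "0 \<le> x \<Longrightarrow> sdd x \<le> 0"
proof -
  assume x: "0 \<le> x"
  have "exp (-x) \<le> 1" using x by simp
  then have "1/2 \<le> sigmoid x" unfolding sigmoid_def by (simp add: field_simps add_pos_pos)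
  then show ?thesis unfolding sdd_def using sd_pos[of x] by (simp add: mult_nonneg_nonpos)
qed

lemma exp_neg_at_top: "((\<lambda>x::real. exp (- x)) \<longlongrightarrow> 0) at_top"
  by (rule filterlim_compose[OF exp_at_bot filterlim_uminus_at_bot_at_top])

lemma sigmoid_at_top: "(sigmoid \<longlongrightarrow> 1) at_top"
proof -
  have "((\<lambda>x::real. 1 / (1 + exp (- x))) \<longlongrightarrow> 1 / (1 + 0)) at_top"
    by (intro tendsto_divide tendsto_const tendsto_add exp_neg_at_top) simp
  then show ?thesis unfolding sigmoid_def[abs_def] by simp
qed

lemma sd_at_top: "(sigmoid_deriv \<longlongrightarrow> 0) at_top"
proof -
  have "((\<lambda>x. sigmoid x * (1 - sigmoid x)) \<longlongrightarrow> 1 * (1 - 1)) at_top"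
    by (intro tendsto_intros sigmoid_at_top)
  then show ?thesis unfolding sigmoid_deriv_def[abs_def] by simp
qed

lemma cont_sd: "continuous_on A sigmoid_deriv"
  using has_deriv_sd by (meson DERIV_isCont continuous_at_imp_continuous_on)

lemma cont_sdd: "continuous_on A sdd"
  using has_deriv_sdd by (meson DERIV_isCont continuous_at_imp_continuous_on)

lemma cont_sigmoid: "continuous_on A sigmoid"
  using has_deriv_sigmoid by (meson DERIV_isCont continuous_at_imp_continuous_on)

lemma meas_sd[measurable]: "sigmoid_deriv \<in> borel_measurable borel"
  by (rule borel_measurable_continuous_onI[OF cont_sd])

lemma meas_sdd[measurable]: "sdd \<in> borel_measurable borel"
  by (rule borel_measurable_continuous_onI[OF cont_sdd])

lemma nn_half_sd: "(\<integral>\<^sup>+x. ennreal (sigmoid_deriv x) * indicator {0..} x \<partial>lborel) = ennreal (1/2)"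
proof -
  have "(\<integral>\<^sup>+x. ennreal (sigmoid_deriv x) * indicator {0..} x \<partial>lborel) = 1 - sigmoid 0"
    by (rule nn_integral_FTC_atLeast[OF meas_sd has_deriv_sigmoid less_imp_le[OF sd_pos] sigmoid_at_top])
  also have "\<dots> = ennreal (1/2)" by (simp add: sigmoid_def)
  finally show ?thesis by simp
qed

lemma nn_half_sdd: "(\<integral>\<^sup>+x. ennreal (\<bar>sdd x\<bar>) * indicator {0..} x \<partial>lborel) = ennreal (1/4)"
proof -
  have "(\<integral>\<^sup>+x. ennreal (\<bar>sdd x\<bar>) * indicator {0..} x \<partial>lborel)
      = (\<integral>\<^sup>+x. ennreal (- sdd x) * indicator {0..} x \<partial>lborel)"
    by (intro nn_integral_cong) (auto simp: indicator_def sdd_nonpos abs_if dest: sdd_nonpos)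
  also have "\<dots> = 0 - (- sigmoid_deriv 0)"
  proof (rule nn_integral_FTC_atLeast)
    show "(\<lambda>x. - sdd x) \<in> borel_measurable borel" by measurable
    show "((\<lambda>x. - sigmoid_deriv x) has_real_derivative - sdd x) (at x)" for x
      by (intro derivative_intros has_deriv_sd)
    show "0 \<le> x \<Longrightarrow> 0 \<le> - sdd x" for x using sdd_nonpos[of x] by simp
    show "((\<lambda>x. - sigmoid_deriv x) \<longlongrightarrow> 0) at_top"
      using tendsto_minus[OF sd_at_top] by simp
  qed
  also have "\<dots> = ennreal (1/4)" by (simp add: sigmoid_deriv_def sigmoid_def)
  finally show ?thesis by simp
qed

lemma nn_even_le:
  fixes g :: "real \<Rightarrow> real"
  assumes [measurable]: "g \<in> borel_measurable borel" and ev: "\<And>x. g (- x) = g x"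
  shows "(\<integral>\<^sup>+x. ennreal (g x) \<partial>lborel) \<le>
     (\<integral>\<^sup>+x. ennreal (g x) * indicator {0..} x \<partial>lborel) + (\<integral>\<^sup>+x. ennreal (g x) * indicator {0..} x \<partial>lborel)"
proof -
  have "(\<integral>\<^sup>+x. ennreal (g x) \<partial>lborel) =
      (\<integral>\<^sup>+x. ennreal (g x) * indicator {0..} x + ennreal (g x) * indicator {..<0} x \<partial>lborel)"
    by (intro nn_integral_cong) (auto simp: indicator_def)
  also have "\<dots> = (\<integral>\<^sup>+x. ennreal (g x) * indicator {0..} x \<partial>lborel)
                 + (\<integral>\<^sup>+x. ennreal (g x) * indicator {..<0} x \<partial>lborel)"
    by (rule nn_integral_add) auto
  also have "(\<integral>\<^sup>+x. ennreal (g x) * indicator {..<0} x \<partial>lborel)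
      = (\<integral>\<^sup>+x. ennreal (g x) * indicator {0<..} x \<partial>lborel)"
    using nn_integral_real_affine[of "\<lambda>x. ennreal (g x) * indicator {..<0} x" "-1" 0]
    by (simp add: ev indicator_def)
  also have "\<dots> \<le> (\<integral>\<^sup>+x. ennreal (g x) * indicator {0..} x \<partial>lborel)"
    by (intro nn_integral_mono) (auto simp: indicator_def)
  finally show ?thesis by (simp add: add_left_mono)
qed

lemma nn_sd_le: "(\<integral>\<^sup>+x. ennreal (sigmoid_deriv x) \<partial>lborel) \<le> 1"
proof -
  have "(\<integral>\<^sup>+x. ennreal (sigmoid_deriv x) \<partial>lborel) \<le> ennreal (1/2) + ennreal (1/2)"
    using nn_even_le[OF meas_sd sd_even] unfolding nn_half_sd by simp
  also have "\<dots> = ennreal (1/2 + 1/2)"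
    by (rule ennreal_plus[symmetric]) auto
  finally show ?thesis by simp
qed

lemma nn_sdd_le: "(\<integral>\<^sup>+x. ennreal (\<bar>sdd x\<bar>) \<partial>lborel) \<le> ennreal (1/2)"
proof -
  have m: "(\<lambda>x. \<bar>sdd x\<bar>) \<in> borel_measurable borel" by measurable
  have "(\<integral>\<^sup>+x. ennreal (\<bar>sdd x\<bar>) \<partial>lborel) \<le> ennreal (1/4) + ennreal (1/4)"
    using nn_even_le[OF m] sdd_odd unfolding nn_half_sdd by simp
  also have "\<dots> = ennreal (1/4 + 1/4)"
    by (rule ennreal_plus[symmetric]) auto
  finally show ?thesis by simp
qed

lemma std_normal_le: "std_normal_density x \<le> 1 / sqrt (2 * pi)"
proof -
  have "exp (- x\<^sup>2 / 2) \<le> 1" by simp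
  then show ?thesis unfolding std_normal_density_def
    by (intro mult_left_le) auto
qed

lemma smooth_bound:
  fixes h :: "real \<Rightarrow> real"
  assumes hm[measurable]: "h \<in> borel_measurable borel"
    and hA: "(\<integral>\<^sup>+x. ennreal \<bar>h x\<bar> \<partial>lborel) \<le> ennreal A" and A: "0 \<le> A" and al: "0 < \<alpha>"
  shows "\<bar>\<integral>x. h (c + \<alpha> * x) \<partial>stdN\<bar> \<le> A / (\<alpha> * sqrt (2*pi))"
proof -
  have "\<bar>\<integral>x. h (c + \<alpha> * x) \<partial>stdN\<bar> \<le> (\<integral>x. \<bar>h (c + \<alpha> * x)\<bar> \<partial>stdN)"
    using integral_norm_bound[of stdN "\<lambda>x. h (c + \<alpha> * x)"] by simp
  also have "\<dots> = enn2real (\<integral>\<^sup>+x. ennreal \<bar>h (c + \<alpha> * x)\<bar> \<partial>stdN)"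
    by (rule integral_eq_nn_integral) auto
  also have "\<dots> \<le> A / (\<alpha> * sqrt (2*pi))"
  proof (rule enn2real_leI)
    show "0 \<le> A / (\<alpha> * sqrt (2*pi))" using A al by simp
    have aff: "(\<integral>\<^sup>+x. ennreal \<bar>h (c + \<alpha> * x)\<bar> \<partial>lborel) = ennreal (1/\<alpha>) * (\<integral>\<^sup>+x. ennreal \<bar>h x\<bar> \<partial>lborel)"
    proof -
      have "(\<integral>\<^sup>+x. ennreal \<bar>h (c + \<alpha> * x)\<bar> \<partial>lborel)
          = \<bar>1/\<alpha>\<bar> * (\<integral>\<^sup>+x. ennreal \<bar>h (c + \<alpha> * (- c/\<alpha> + 1/\<alpha> * x))\<bar> \<partial>lborel)"
        by (rule nn_integral_real_affine) (use al in auto)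
      also have "\<dots> = ennreal (1/\<alpha>) * (\<integral>\<^sup>+x. ennreal \<bar>h x\<bar> \<partial>lborel)"
        using al by (simp add: field_simps)
      finally show ?thesis .
    qed
    have "(\<integral>\<^sup>+x. ennreal \<bar>h (c + \<alpha> * x)\<bar> \<partial>stdN)
        = (\<integral>\<^sup>+x. ennreal (std_normal_density x) * ennreal \<bar>h (c + \<alpha> * x)\<bar> \<partial>lborel)"
      unfolding stdN_def by (rule nn_integral_density) auto
    also have "\<dots> \<le> (\<integral>\<^sup>+x. ennreal (1 / sqrt (2 * pi)) * ennreal \<bar>h (c + \<alpha> * x)\<bar> \<partial>lborel)"
      by (intro nn_integral_mono mult_right_mono ennreal_leI std_normal_le) auto
    also have "\<dots> = ennreal (1 / sqrt (2 * pi)) * (\<integral>\<^sup>+x. ennreal \<bar>h (c + \<alpha> * x)\<bar> \<partial>lborel)"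
      by (rule nn_integral_cmult) auto
    also have "\<dots> \<le> ennreal (1 / sqrt (2 * pi)) * (ennreal (1/\<alpha>) * ennreal A)"
      unfolding aff by (intro mult_left_mono hA) auto
    also have "\<dots> = ennreal (A / (\<alpha> * sqrt (2*pi)))"
      using al A by (simp add: ennreal_mult[symmetric])
    finally show "(\<integral>\<^sup>+x. ennreal \<bar>h (c + \<alpha> * x)\<bar> \<partial>stdN) \<le> ennreal (A / (\<alpha> * sqrt (2*pi)))" .
  qed
  finally show ?thesis .
qed

definition m1 :: real where "m1 = (\<integral>x. \<bar>x\<bar> \<partial>stdN)"

lemma integrable_abs_stdN: "integrable stdN (\<lambda>x. \<bar>x\<bar>)"
  unfolding stdN_def
  by (subst integrable_density) (use integrable_std_normal_moment_abs[of 1] in auto)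

lemma m1_nonneg: "0 \<le> m1"
  unfolding m1_def by simp

lemma integrable_bounded_stdN:
  fixes f :: "real \<Rightarrow> real"
  assumes "f \<in> borel_measurable borel" "\<And>x. \<bar>f x\<bar> \<le> B"
  shows "integrable stdN f"
proof -
  interpret S: prob_space stdN by (rule prob_space_stdN)
  show ?thesis by (rule S.integrable_const_bound[where B=B]) (use assms in auto)
qed

definition GI :: "(real \<Rightarrow> real) \<Rightarrow> real \<Rightarrow> real \<Rightarrow> real" where
  "GI f c a = (\<integral>x. f (c + a * x) \<partial>stdN)"

locale nicef =
  fixes f :: "real \<Rightarrow> real"
  assumes meas[measurable]: "f \<in> borel_measurable borel"
    and bnd: "\<And>x. \<bar>f x\<bar> \<le> 1/4"
    and lip: "\<And>a b. \<bar>f a - f b\<bar> \<le> 1/4 * \<bar>a - b\<bar>"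
begin

lemma integ: "integrable stdN (\<lambda>x. f (c + a * x))"
  using bnd by (intro integrable_bounded_stdN[where B="1/4"]) auto

lemma GI_bound: "\<bar>GI f c a\<bar> \<le> 1/4"
proof -
  interpret S: prob_space stdN by (rule prob_space_stdN)
  have "\<bar>GI f c a\<bar> \<le> (\<integral>x. \<bar>f (c + a * x)\<bar> \<partial>stdN)"
    unfolding GI_def using integral_norm_bound[of stdN "\<lambda>x. f (c + a * x)"] by simp
  also have "\<dots> \<le> (\<integral>x. 1/4 \<partial>stdN)"
    using bnd by (intro integral_mono integ integrable_abs) auto
  also have "\<dots> = 1/4" using S.prob_space by simp
  finally show ?thesis .
qed

lemma GI_lip: "\<bar>GI f c a - GI f c' a'\<bar> \<le> 1/4 * (\<bar>c - c'\<bar> + \<bar>a - a'\<bar> * m1)"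
proof -
  interpret S: prob_space stdN by (rule prob_space_stdN)
  have "GI f c a - GI f c' a' = (\<integral>x. f (c + a * x) - f (c' + a' * x) \<partial>stdN)"
    unfolding GI_def by (rule Bochner_Integration.integral_diff[symmetric]) (auto intro: integ)
  then have "\<bar>GI f c a - GI f c' a'\<bar> \<le> (\<integral>x. \<bar>f (c + a * x) - f (c' + a' * x)\<bar> \<partial>stdN)"
    using integral_norm_bound[of stdN "\<lambda>x. f (c + a * x) - f (c' + a' * x)"] by simp
  also have "\<dots> \<le> (\<integral>x. 1/4 * \<bar>c - c'\<bar> + (1/4 * \<bar>a - a'\<bar>) * \<bar>x\<bar> \<partial>stdN)"
  proof (intro integral_mono)
    show "integrable stdN (\<lambda>x. \<bar>f (c + a * x) - f (c' + a' * x)\<bar>)"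
      by (intro integrable_abs Bochner_Integration.integrable_diff integ)
    show "integrable stdN (\<lambda>x. 1/4 * \<bar>c - c'\<bar> + (1/4 * \<bar>a - a'\<bar>) * \<bar>x\<bar>)"
      by (intro Bochner_Integration.integrable_add integrable_mult_right integrable_abs_stdN) auto
    fix x
    have "\<bar>f (c + a * x) - f (c' + a' * x)\<bar> \<le> 1/4 * \<bar>(c + a * x) - (c' + a' * x)\<bar>" by (rule lip)
    also have "\<bar>(c + a * x) - (c' + a' * x)\<bar> \<le> \<bar>c - c'\<bar> + \<bar>a - a'\<bar> * \<bar>x\<bar>"
      by (metis abs_mult abs_triangle_ineq add_diff_add left_diff_distrib)
    finally show "\<bar>f (c + a * x) - f (c' + a' * x)\<bar> \<le> 1/4 * \<bar>c - c'\<bar> + (1/4 * \<bar>a - a'\<bar>) * \<bar>x\<bar>"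
      by (simp add: algebra_simps)
  qed
  also have "\<dots> = 1/4 * \<bar>c - c'\<bar> + (1/4 * \<bar>a - a'\<bar>) * m1"
    unfolding m1_def using S.prob_space integrable_mult_right[OF integrable_abs_stdN, of "1/4 * \<bar>a - a'\<bar>"]
    by (subst Bochner_Integration.integral_add) auto
  finally show ?thesis by (simp add: algebra_simps)
qed

lemma GI_cont: "continuous_on A (\<lambda>r. GI f c (sqrt r))"
proof -
  have "(1/4 * m1)-lipschitz_on UNIV (GI f c)"
  proof (rule lipschitz_onI)
    fix a a' :: real
    show "dist (GI f c a) (GI f c a') \<le> 1/4 * m1 * dist a a'"
      using GI_lip[of c a c a'] by (simp add: dist_real_def algebra_simps)
  qed (simp add: m1_nonneg)
  then have "continuous_on UNIV (GI f c)" by (rule lipschitz_on_continuous_on)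
  then show ?thesis
    by (rule continuous_on_compose2[of UNIV]) (auto intro: continuous_intros)
qed

lemma GI_cont_c: "continuous_on A (\<lambda>c. GI f c a)"
proof -
  have "(1/4)-lipschitz_on UNIV (\<lambda>c. GI f c a)"
  proof (rule lipschitz_onI)
    fix c c' :: real
    show "dist (GI f c a) (GI f c' a) \<le> 1/4 * dist c c'"
      using GI_lip[of c a c' a] by (simp add: dist_real_def algebra_simps)
  qed simp
  then have "continuous_on UNIV (\<lambda>c. GI f c a)" by (rule lipschitz_on_continuous_on)
  then show ?thesis by (rule continuous_on_subset) simp
qed

end

interpretation sd: nicef sigmoid_deriv
  by unfold_locales (rule meas_sd, rule abs_sd_le, rule sd_lip)

interpretation sdd: nicef sdd
  by unfold_locales (rule meas_sdd, rule abs_sdd_le, rule sdd_lip)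

lemma GI_taylor:
  "\<bar>GI sigmoid_deriv (c + h) a - GI sigmoid_deriv c a - h * GI sdd c a\<bar> \<le> h\<^sup>2 / 4"
proof -
  interpret S: prob_space stdN by (rule prob_space_stdN)
  have "GI sigmoid_deriv (c + h) a - GI sigmoid_deriv c a - h * GI sdd c a
      = (\<integral>x. sigmoid_deriv ((c + h) + a * x) - sigmoid_deriv (c + a * x) - h * sdd (c + a * x) \<partial>stdN)"
    unfolding GI_def
    by (simp add: Bochner_Integration.integral_diff[OF Bochner_Integration.integrable_diff[OF sd.integ sd.integ] integrable_mult_right[OF sdd.integ]]
       Bochner_Integration.integral_diff[OF sd.integ sd.integ])
  then have "\<bar>GI sigmoid_deriv (c + h) a - GI sigmoid_deriv c a - h * GI sdd c a\<bar>
      \<le> (\<integral>x. \<bar>sigmoid_deriv ((c + h) + a * x) - sigmoid_deriv (c + a * x) - h * sdd (c + a * x)\<bar> \<partial>stdN)"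
    using integral_norm_bound[of stdN "\<lambda>x. sigmoid_deriv ((c + h) + a * x) - sigmoid_deriv (c + a * x) - h * sdd (c + a * x)"]
    by simp
  also have "\<dots> \<le> (\<integral>x. h\<^sup>2 / 4 \<partial>stdN)"
  proof (rule integral_mono)
    show "integrable stdN (\<lambda>x. \<bar>sigmoid_deriv ((c + h) + a * x) - sigmoid_deriv (c + a * x) - h * sdd (c + a * x)\<bar>)"
      by (intro integrable_abs Bochner_Integration.integrable_diff integrable_mult_right sd.integ sdd.integ)
    show "\<bar>sigmoid_deriv ((c + h) + a * x) - sigmoid_deriv (c + a * x) - h * sdd (c + a * x)\<bar> \<le> h\<^sup>2 / 4" for x
      using sd_taylor[of "c + a * x" h] by (simp add: algebra_simps)
  qed auto
  also have "\<dots> = h\<^sup>2 / 4" using S.prob_space by simp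
  finally show ?thesis .
qed

lemma GI_sd_decay: "0 < a \<Longrightarrow> \<bar>GI sigmoid_deriv c a\<bar> \<le> 1 / (a * sqrt (2*pi))"
  unfolding GI_def
  using smooth_bound[of sigmoid_deriv 1 a c] nn_sd_le sd_pos by (simp add: less_imp_le)

lemma GI_sdd_decay: "0 < a \<Longrightarrow> \<bar>GI sdd c a\<bar> \<le> (1/2) / (a * sqrt (2*pi))"
  unfolding GI_def
  using smooth_bound[of sdd "1/2" a c] nn_sdd_le by simp

definition kf :: "real \<Rightarrow> real \<Rightarrow> real" where "kf c r = GI sigmoid_deriv c (sqrt r)"
definition kcf :: "real \<Rightarrow> real \<Rightarrow> real" where "kcf c r = GI sdd c (sqrt r)"
definition Kf :: "real \<Rightarrow> real \<Rightarrow> real" where "Kf c T = integral {0..T} (kf c)"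
definition Kcf :: "real \<Rightarrow> real \<Rightarrow> real" where "Kcf c T = integral {0..T} (kcf c)"

lemma kf_cont: "continuous_on A (kf c)"
  unfolding kf_def[abs_def] by (rule sd.GI_cont)

lemma kcf_cont: "continuous_on A (kcf c)"
  unfolding kcf_def[abs_def] by (rule sdd.GI_cont)

lemma kf_int: "kf c integrable_on {a..b}"
  by (rule integrable_continuous_interval[OF kf_cont])

lemma kcf_int: "kcf c integrable_on {a..b}"
  by (rule integrable_continuous_interval[OF kcf_cont])

lemma kf_bound: "\<bar>kf c r\<bar> \<le> 1/4"
  unfolding kf_def by (rule sd.GI_bound)

lemma Kf_bound: assumes "0 \<le> T" shows "\<bar>Kf c T\<bar> \<le> T / 4"
proof -
  have "norm (integral {0..T} (kf c)) \<le> 1/4 * (T - 0)"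
    by (rule integral_bound[OF assms kf_cont]) (metis kf_bound real_norm_def)
  then show ?thesis unfolding Kf_def by simp
qed

lemma Kf_0[simp]: "Kf c 0 = 0" unfolding Kf_def by simp
lemma Kcf_0[simp]: "Kcf c 0 = 0" unfolding Kcf_def by simp

lemma kf_decay: "0 < r \<Longrightarrow> \<bar>kf c r\<bar> \<le> 1 / (sqrt r * sqrt (2*pi))"
  unfolding kf_def by (rule GI_sd_decay) simp

lemma kcf_decay: "0 < r \<Longrightarrow> \<bar>kcf c r\<bar> \<le> (1/2) / (sqrt r * sqrt (2*pi))"
  unfolding kcf_def by (rule GI_sdd_decay) simp

lemma Kcf_bound: assumes T: "0 \<le> T" shows "\<bar>Kcf c T\<bar> \<le> sqrt T / sqrt (2*pi)"
proof -
  define g where "g r = (if r = 0 then 1 else (1/2) / (sqrt r * sqrt (2*pi)))" for r :: real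
  define G where "G r = sqrt r / sqrt (2*pi)" for r :: real
  have "((\<lambda>r. (1/2) / (sqrt r * sqrt (2*pi))) has_integral G T - G 0) {0..T}"
  proof (rule fundamental_theorem_of_calculus_interior[OF T])
    show "continuous_on {0..T} G" unfolding G_def by (intro continuous_intros) auto
    fix x assume x: "x \<in> {0<..<T}"
    have "(sqrt has_real_derivative inverse (sqrt x) / 2) (at x)"
      using x by (intro DERIV_real_sqrt) simp
    then have "(G has_real_derivative (inverse (sqrt x) / 2) / sqrt (2*pi)) (at x)"
      unfolding G_def[abs_def] by (rule DERIV_cdivide)
    then show "(G has_vector_derivative (1/2) / (sqrt x * sqrt (2*pi))) (at x)"
      by (simp add: has_real_derivative_iff_has_vector_derivative[symmetric] field_simps)
  qed
  then have "((\<lambda>r. (1/2) / (sqrt r * sqrt (2*pi))) has_integral G T) {0..T}"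
    by (simp add: G_def)
  then have gi: "(g has_integral G T) {0..T}"
    by (rule has_integral_spike_finite[where S="{0}", rotated 2]) (auto simp: g_def)
  have "\<bar>Kcf c T\<bar> = norm (integral {0..T} (kcf c))" unfolding Kcf_def by simp
  also have "\<dots> \<le> integral {0..T} g"
  proof (rule integral_norm_bound_integral)
    show "kcf c integrable_on {0..T}" by (rule kcf_int)
    show "g integrable_on {0..T}" using gi by blast
    fix r assume "r \<in> {0..T}"
    show "norm (kcf c r) \<le> g r"
    proof (cases "r = 0")
      case True then show ?thesis
        unfolding g_def using kcf_def sdd.GI_bound[of c "sqrt r"] by simp
    next
      case False then show ?thesis
        using \<open>r \<in> {0..T}\<close> kcf_decay[of r c] by (simp add: g_def)
    qed
  qed
  also have "\<dots> = G T" using gi by (rule integral_unique)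
  finally show ?thesis unfolding G_def .
qed

lemma Kf_taylor_c:
  assumes T: "0 \<le> T"
  shows "\<bar>Kf (c + h) T - Kf c T - h * Kcf c T\<bar> \<le> T * h\<^sup>2 / 4"
proof -
  have "Kf (c + h) T - Kf c T - h * Kcf c T = integral {0..T} (\<lambda>r. kf (c + h) r - kf c r - h * kcf c r)"
  proof -
    have i1: "(\<lambda>r. kf (c + h) r - kf c r) integrable_on {0..T}"
      by (intro integrable_continuous_interval continuous_intros kf_cont)
    have i2: "(\<lambda>r. h * kcf c r) integrable_on {0..T}"
      by (intro integrable_continuous_interval continuous_intros kcf_cont)
    have "integral {0..T} (\<lambda>r. kf (c + h) r - kf c r - h * kcf c r)
        = integral {0..T} (\<lambda>r. kf (c + h) r - kf c r) - integral {0..T} (\<lambda>r. h * kcf c r)"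
      by (rule integral_diff[OF i1 i2])
    also have "integral {0..T} (\<lambda>r. kf (c + h) r - kf c r) = Kf (c + h) T - Kf c T"
      unfolding Kf_def by (rule integral_diff[OF kf_int kf_int])
    also have "integral {0..T} (\<lambda>r. h * kcf c r) = h * Kcf c T"
      unfolding Kcf_def by (rule integral_mult[OF kcf_int, symmetric])
    finally show ?thesis by simp
  qed
  also have "norm \<dots> \<le> h\<^sup>2 / 4 * (T - 0)"
  proof (rule integral_bound[OF T])
    show "continuous_on {0..T} (\<lambda>r. kf (c + h) r - kf c r - h * kcf c r)"
      by (intro continuous_intros kf_cont kcf_cont)
    show "norm (kf (c + h) r - kf c r - h * kcf c r) \<le> h\<^sup>2 / 4" for r
      unfolding kf_def kcf_def using GI_taylor by simp
  qed
  finally show ?thesis by (simp add: algebra_simps)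
qed

lemma sqrt_diff_le: assumes "0 < T0" "0 \<le> r" shows "\<bar>sqrt r - sqrt T0\<bar> \<le> \<bar>r - T0\<bar> / sqrt T0"
proof -
  have s: "sqrt T0 > 0" using assms by simp
  have e: "r - T0 = (sqrt r - sqrt T0) * (sqrt r + sqrt T0)"
    using assms by (simp add: algebra_simps)
  have "\<bar>r - T0\<bar> = \<bar>sqrt r - sqrt T0\<bar> * (sqrt r + sqrt T0)"
    unfolding e using assms by (simp add: abs_mult)
  also have "\<dots> \<ge> \<bar>sqrt r - sqrt T0\<bar> * sqrt T0"
    using assms by (intro mult_left_mono) auto
  finally show ?thesis using s by (simp add: field_simps)
qed

lemma kf_lip_T: assumes "0 < T0" "0 \<le> r"
  shows "\<bar>kf c r - kf c T0\<bar> \<le> m1 / 4 * (\<bar>r - T0\<bar> / sqrt T0)"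
proof -
  have "\<bar>kf c r - kf c T0\<bar> \<le> 1/4 * (\<bar>c - c\<bar> + \<bar>sqrt r - sqrt T0\<bar> * m1)"
    unfolding kf_def by (rule sd.GI_lip)
  also have "\<dots> \<le> 1/4 * (\<bar>r - T0\<bar> / sqrt T0 * m1)"
  proof -
    have "\<bar>sqrt r - sqrt T0\<bar> * m1 \<le> \<bar>r - T0\<bar> / sqrt T0 * m1"
      by (rule mult_right_mono[OF sqrt_diff_le[OF assms] m1_nonneg])
    then show ?thesis by simp
  qed
  finally show ?thesis by (simp add: algebra_simps)
qed

lemma Kf_taylor_T:
  assumes T0: "0 < T0" and T: "0 \<le> T"
  shows "\<bar>Kf c T - Kf c T0 - (T - T0) * kf c T0\<bar> \<le> (T - T0)\<^sup>2 * m1 / (4 * sqrt T0)"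
proof -
  have key: "\<bar>integral {a..b} (kf c) - (b - a) * kf c T0\<bar> \<le> (b - a) * ((b - a) * m1 / (4 * sqrt T0))"
    if ab: "a \<le> b" "0 \<le> a" and Tin: "T0 \<in> {a..b}" for a b
  proof -
    have "integral {a..b} (kf c) - (b - a) * kf c T0 = integral {a..b} (\<lambda>r. kf c r - kf c T0)"
      using ab by (subst integral_diff) (auto simp: kf_int intro: integrable_continuous_interval)
    also have "norm \<dots> \<le> ((b - a) * m1 / (4 * sqrt T0)) * (b - a)"
    proof (rule integral_bound[OF ab(1)])
      show "continuous_on {a..b} (\<lambda>r. kf c r - kf c T0)" by (intro continuous_intros kf_cont)
      fix r assume r: "r \<in> {a..b}"
      have "norm (kf c r - kf c T0) \<le> m1 / 4 * (\<bar>r - T0\<bar> / sqrt T0)"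
        using kf_lip_T[OF T0, of r c] r ab by simp
      also have "\<dots> \<le> m1 / 4 * ((b - a) / sqrt T0)"
        using r Tin T0 m1_nonneg by (intro mult_left_mono divide_right_mono) auto
      finally show "norm (kf c r - kf c T0) \<le> (b - a) * m1 / (4 * sqrt T0)" by (simp add: mult.commute)
    qed
    finally show ?thesis by (simp add: algebra_simps)
  qed
  show ?thesis
  proof (cases "T0 \<le> T")
    case True
    have "Kf c T = Kf c T0 + integral {T0..T} (kf c)"
      unfolding Kf_def using True T0 by (intro Henstock_Kurzweil_Integration.integral_combine[symmetric] kf_int) auto
    then have e: "Kf c T - Kf c T0 - (T - T0) * kf c T0 = integral {T0..T} (kf c) - (T - T0) * kf c T0"
      by simp
    have r: "(T - T0) * ((T - T0) * m1 / (4 * sqrt T0)) = (T - T0)\<^sup>2 * m1 / (4 * sqrt T0)"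
      by (simp add: power2_eq_square)
    show ?thesis unfolding e r[symmetric] using key[of T0 T] True T0 by simp
  next
    case False
    have "Kf c T0 = Kf c T + integral {T..T0} (kf c)"
      unfolding Kf_def using False T by (intro Henstock_Kurzweil_Integration.integral_combine[symmetric] kf_int) auto
    then have e: "Kf c T - Kf c T0 - (T - T0) * kf c T0 = - (integral {T..T0} (kf c) - (T0 - T) * kf c T0)"
      by (simp add: algebra_simps)
    have r: "(T0 - T) * ((T0 - T) * m1 / (4 * sqrt T0)) = (T - T0)\<^sup>2 * m1 / (4 * sqrt T0)"
      by (simp add: power2_eq_square algebra_simps)
    show ?thesis unfolding e r[symmetric] abs_minus_cancel using key[of T T0] False T by simp
  qed
qed

lemma inner_mat_transpose: "((A :: real^'n^'m) *v x) \<bullet> y = x \<bullet> (transpose A *v y)"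
  by (metis dot_lmul_matrix transpose_transpose vector_transpose_matrix)

lemma orth_norm:
  assumes "orthogonal_matrix (U :: real^'n^'n)"
  shows "norm (U *v x) = norm x"
proof -
  have "(U *v x) \<bullet> (U *v x) = x \<bullet> x"
    using assms by (simp add: inner_mat_transpose matrix_vector_mul_assoc orthogonal_matrix)
  then show ?thesis by (simp add: norm_eq_sqrt_inner)
qed

lemma orth_norm_T:
  assumes "orthogonal_matrix (U :: real^'n^'n)"
  shows "norm (transpose U *v x) = norm x"
  using orth_norm[of "transpose U"] assms by (simp add: orthogonal_matrix_transpose)

lemma diag_mv: fixes L :: "real^'p^'p" assumes "\<forall>i j. i \<noteq> j \<longrightarrow> L $ i $ j = 0"
  shows "(L *v y) $ j = L $ j $ j * y $ j"
proof -
  have "(L *v y) $ j = (\<Sum>k\<in>UNIV. L $ j $ k * y $ k)" by (simp add: matrix_vector_mult_def)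
  also have "\<dots> = L $ j $ j * y $ j"
    using assms by (subst sum.remove[of _ j]) auto
  finally show ?thesis .
qed

lemma D_mv: "(diag_sqrt L *v y) $ j = sqrt (L $ j $ j) * y $ j"
  using diag_mv[of "diag_sqrt L" y j] by (simp add: diag_sqrt_def)

lemma D_transpose: "transpose (diag_sqrt L) = diag_sqrt L"
  by (simp add: diag_sqrt_def transpose_def vec_eq_iff)

definition qf :: "real^'p^'p \<Rightarrow> real^'p \<Rightarrow> real" where
  "qf L y = (L *v y) \<bullet> y"

lemma qf_sum: assumes "\<forall>i j. i \<noteq> j \<longrightarrow> L $ i $ j = 0"
  shows "qf L y = (\<Sum>j\<in>UNIV. L $ j $ j * (y $ j)\<^sup>2)"
  unfolding qf_def inner_vec_def using diag_mv[OF assms]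
  by (simp add: power2_eq_square mult.assoc)

lemma qf_nonneg: assumes "\<forall>i j. i \<noteq> j \<longrightarrow> L $ i $ j = 0" "\<forall>i. L $ i $ i \<ge> 0"
  shows "0 \<le> qf L y"
  unfolding qf_sum[OF assms(1)] using assms(2) by (intro sum_nonneg) simp

lemma norm_D_sq: assumes "\<forall>i j. i \<noteq> j \<longrightarrow> L $ i $ j = 0" "\<forall>i. L $ i $ i \<ge> 0"
  shows "(norm (diag_sqrt L *v y))\<^sup>2 = qf L y"
  unfolding qf_sum[OF assms(1)] power2_norm_eq_inner inner_vec_def D_mv
  using assms(2) by (intro sum.cong refl) (simp add: power2_eq_square algebra_simps)

lemma qf_sym: fixes L :: "real^'p^'p" assumes "\<forall>i j. i \<noteq> j \<longrightarrow> L $ i $ j = 0"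
  shows "(L *v a) \<bullet> b = (L *v b) \<bullet> a"
  unfolding inner_vec_def using diag_mv[OF assms] by (simp add: algebra_simps inner_real_def)

lemma qf_add: assumes "\<forall>i j. i \<noteq> j \<longrightarrow> L $ i $ j = 0"
  shows "qf L (y + h) = qf L y + 2 * ((L *v y) \<bullet> h) + qf L h"
  unfolding qf_def using qf_sym[OF assms, of h y]
  by (simp add: matrix_vector_right_distrib inner_add_left inner_add_right)

definition lamf :: "real^'p^'p \<Rightarrow> real^'p^'p \<Rightarrow> real" where
  "lamf U L = onorm (\<lambda>x. (U ** L ** transpose U) *v x)"

lemma lam_nonneg: "0 \<le> lamf U L"
  unfolding lamf_def by (rule onorm_pos_le) simp

lemma L_norm_le:
  assumes U: "orthogonal_matrix U"
  shows "norm (L *v v) \<le> lamf U L * norm v"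
proof -
  have UU: "transpose U ** U = mat 1" using U by (simp add: orthogonal_matrix)
  have e: "L *v v = transpose U *v ((U ** L ** transpose U) *v (U *v v))"
    by (simp add: matrix_vector_mul_assoc matrix_mul_assoc UU)
       (simp add: matrix_mul_assoc[symmetric] UU)
  have "norm (L *v v) = norm ((U ** L ** transpose U) *v (U *v v))"
    unfolding e by (rule orth_norm_T[OF U])
  also have "\<dots> \<le> lamf U L * norm (U *v v)"
    unfolding lamf_def by (rule onorm) simp
  also have "norm (U *v v) = norm v" by (rule orth_norm[OF U])
  finally show ?thesis .
qed

lemma qf_le_lam:
  assumes U: "orthogonal_matrix U"
  shows "qf L v \<le> lamf U L * (norm v)\<^sup>2"
proof -
  have "qf L v \<le> norm (L *v v) * norm v" unfolding qf_def by (rule norm_cauchy_schwarz)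
  also have "\<dots> \<le> lamf U L * norm v * norm v"
    by (intro mult_right_mono L_norm_le[OF U]) simp
  finally show ?thesis by (simp add: power2_eq_square mult.assoc)
qed

lemma Ldiag_le_lam:
  assumes U: "orthogonal_matrix U" and Ld: "\<forall>i j. i \<noteq> j \<longrightarrow> L $ i $ j = 0"
  shows "L $ j $ j \<le> lamf U L"
proof -
  have "L $ j $ j = (L *v axis j 1) $ j" using diag_mv[OF Ld, of "axis j 1" j] by simp
  also have "\<dots> \<le> norm (L *v axis j 1)" using component_le_norm_cart by (rule abs_le_D1)
  also have "\<dots> \<le> lamf U L * norm (axis j (1::real))" by (rule L_norm_le[OF U])
  finally show ?thesis by simp
qed

lemma Lnorm_sq_le:
  assumes U: "orthogonal_matrix U" and Ld: "\<forall>i j. i \<noteq> j \<longrightarrow> L $ i $ j = 0"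
    and Lp: "\<forall>i. L $ i $ i \<ge> 0"
  shows "(norm (L *v y))\<^sup>2 \<le> lamf U L * qf L y"
proof -
  have "(norm (L *v y))\<^sup>2 = (\<Sum>j\<in>UNIV. L $ j $ j * (L $ j $ j * (y $ j)\<^sup>2))"
    unfolding power2_norm_eq_inner inner_vec_def diag_mv[OF Ld]
    by (simp add: power2_eq_square algebra_simps)
  also have "\<dots> \<le> (\<Sum>j\<in>UNIV. lamf U L * (L $ j $ j * (y $ j)\<^sup>2))"
    using Lp Ldiag_le_lam[OF U Ld] by (intro sum_mono mult_right_mono) auto
  also have "\<dots> = lamf U L * qf L y"
    by (simp add: qf_sum[OF Ld] sum_distrib_left)
  finally show ?thesis .
qed

definition av :: "real^'p^'p \<Rightarrow> real^'p^'p \<Rightarrow> real^'p \<Rightarrow> real^'p" where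
  "av U L \<theta> = diag_sqrt L *v (transpose U *v \<theta>)"

definition wv :: "real^'p^'p \<Rightarrow> real^'p^'p \<Rightarrow> real^'p \<Rightarrow> real^'p" where
  "wv U L y = U *v (diag_sqrt L *v y)"

lemma av_norm_sq:
  assumes U: "orthogonal_matrix U" and Ld: "\<forall>i j. i \<noteq> j \<longrightarrow> L $ i $ j = 0"
    and Lp: "\<forall>i. L $ i $ i \<ge> 0"
  shows "(norm (av U L \<theta>))\<^sup>2 \<le> lamf U L * (norm \<theta>)\<^sup>2"
proof -
  have "(norm (av U L \<theta>))\<^sup>2 = qf L (transpose U *v \<theta>)"
    unfolding av_def by (rule norm_D_sq[OF Ld Lp])
  also have "\<dots> \<le> lamf U L * (norm (transpose U *v \<theta>))\<^sup>2" by (rule qf_le_lam[OF U])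
  finally show ?thesis using orth_norm_T[OF U, of \<theta>] by simp
qed

lemma wv_norm_sq:
  assumes U: "orthogonal_matrix U" and Ld: "\<forall>i j. i \<noteq> j \<longrightarrow> L $ i $ j = 0"
    and Lp: "\<forall>i. L $ i $ i \<ge> 0"
  shows "(norm (wv U L y))\<^sup>2 = qf L y"
  unfolding wv_def orth_norm[OF U] by (rule norm_D_sq[OF Ld Lp])

lemma Wtilde_inner: "Wtilde U L \<theta> x \<bullet> y = (\<theta> + x) \<bullet> wv U L y"
  unfolding Wtilde_def wv_def
  by (simp add: inner_mat_transpose D_transpose dot_lmul_matrix)

lemma theta_wv: "\<theta> \<bullet> wv U L y = av U L \<theta> \<bullet> y"
proof -
  have "\<theta> \<bullet> (U *v (diag_sqrt L *v y)) = (\<theta> v* U) \<bullet> (diag_sqrt L *v y)"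
    by (simp add: dot_lmul_matrix)
  also have "\<dots> = (diag_sqrt L *v (\<theta> v* U)) \<bullet> y"
    using inner_mat_transpose[of "diag_sqrt L" "\<theta> v* U" y] by (simp add: D_transpose)
  finally show ?thesis unfolding av_def wv_def by simp
qed

lemma gauss_sd_eq:
  fixes U L :: "real^'p^'p" and \<theta> y :: "real^'p"
  assumes U: "orthogonal_matrix U" and Ld: "\<forall>i j. i \<noteq> j \<longrightarrow> L $ i $ j = 0"
    and Lp: "\<forall>i. L $ i $ i \<ge> 0" and s: "0 \<le> s"
  shows "(\<integral>g. sigmoid_deriv (Wtilde U L \<theta> (sqrt s *\<^sub>R g) \<bullet> y) \<partial>std_gauss)
       = kf (av U L \<theta> \<bullet> y) (s * qf L y)"
proof -
  define w where "w = wv U L y"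
  define c where "c = av U L \<theta> \<bullet> y"
  have nw: "norm w = sqrt (qf L y)"
    using wv_norm_sq[OF U Ld Lp, of y] unfolding w_def by (metis norm_ge_zero real_sqrt_abs abs_of_nonneg)
  have "(\<integral>g. sigmoid_deriv (Wtilde U L \<theta> (sqrt s *\<^sub>R g) \<bullet> y) \<partial>std_gauss)
      = (\<integral>g. (\<lambda>u. sigmoid_deriv (c + sqrt s * u)) (g \<bullet> w) \<partial>std_gauss)"
    unfolding Wtilde_inner c_def theta_wv[symmetric] w_def
    by (simp add: inner_add_left)
  also have "\<dots> = (\<integral>x. (\<lambda>u. sigmoid_deriv (c + sqrt s * u)) (norm w * x) \<partial>stdN)"
    by (rule gauss_proj) measurable
  also have "\<dots> = kf c (s * qf L y)"
    unfolding kf_def GI_def nw using s by (simp add: real_sqrt_mult mult.assoc)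
  finally show ?thesis unfolding c_def .
qed

lemma subst_Kf:
  assumes t: "0 \<le> t" and q: "0 \<le> q"
  shows "integral {0..t} (\<lambda>s. kf c (s * q) * q) = Kf c (t * q)"
proof -
  have "((\<lambda>s. q *\<^sub>R kf c (s * q)) has_integral (Kf c (t * q) - Kf c (0 * q))) {0..t}"
  proof (rule fundamental_theorem_of_calculus[OF t])
    fix s assume s: "s \<in> {0..t}"
    have d1: "((\<lambda>s. s * q) has_vector_derivative q) (at s within {0..t})"
      by (auto intro!: derivative_eq_intros simp: has_real_derivative_iff_has_vector_derivative[symmetric])
    have "((\<lambda>u. integral {0..u} (kf c)) has_vector_derivative kf c (s * q)) (at (s * q) within {0..t*q})"
      by (rule integral_has_vector_derivative[OF kf_cont]) (use s q in \<open>auto intro: mult_right_mono\<close>)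
    then have d2: "((\<lambda>u. integral {0..u} (kf c)) has_vector_derivative kf c (s * q)) (at (s * q) within (\<lambda>s. s * q) ` {0..t})"
      by (rule has_vector_derivative_within_subset) (use q in \<open>auto intro: mult_right_mono\<close>)
    show "((\<lambda>s. Kf c (s * q)) has_vector_derivative q *\<^sub>R kf c (s * q)) (at s within {0..t})"
      using vector_diff_chain_within[OF d1 d2] unfolding Kf_def o_def .
  qed
  then have "((\<lambda>s. kf c (s * q) * q) has_integral Kf c (t * q)) {0..t}"
    by (simp add: mult.commute)
  then show ?thesis by (rule integral_unique)
qed

lemma Fi_eq:
  fixes U L :: "real^'p^'p" and \<theta> y :: "real^'p"
  assumes U: "orthogonal_matrix U" and Ld: "\<forall>i j. i \<noteq> j \<longrightarrow> L $ i $ j = 0"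
    and Lp: "\<forall>i. L $ i $ i \<ge> 0" and t: "0 \<le> t"
  shows "(LINT s:{0..t}|lborel.
           (\<integral>g. sigmoid_deriv (Wtilde U L \<theta> (sqrt s *\<^sub>R g) \<bullet> y) \<partial>std_gauss)
           * ((L *v y) \<bullet> y)) = Kf (av U L \<theta> \<bullet> y) (t * qf L y)"
proof -
  define c where "c = av U L \<theta> \<bullet> y"
  define q where "q = qf L y"
  have q: "0 \<le> q" unfolding q_def by (rule qf_nonneg[OF Ld Lp])
  have "(LINT s:{0..t}|lborel.
           (\<integral>g. sigmoid_deriv (Wtilde U L \<theta> (sqrt s *\<^sub>R g) \<bullet> y) \<partial>std_gauss) * ((L *v y) \<bullet> y))
      = (LINT s:{0..t}|lborel. kf c (s * q) * q)"
    by (rule set_lebesgue_integral_cong)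
       (auto simp: gauss_sd_eq[OF U Ld Lp] c_def q_def qf_def)
  also have "\<dots> = integral {0..t} (\<lambda>s. kf c (s * q) * q)"
  proof (rule set_borel_integral_eq_integral(2))
    have "continuous_on {0..t} (\<lambda>s. kf c (s * q) * q)"
      by (intro continuous_intros continuous_on_compose2[OF kf_cont[of UNIV]]) auto
    then show "set_integrable lborel {0..t} (\<lambda>s. kf c (s * q) * q)"
      unfolding set_integrable_def by (intro borel_integrable_compact) auto
  qed
  also have "\<dots> = Kf c (t * q)" by (rule subst_Kf[OF t q])
  finally show ?thesis unfolding c_def q_def .
qed

lemma has_derivative_quad:
  fixes f :: "'a::real_normed_vector \<Rightarrow> real"
  assumes bl: "bounded_linear D"
    and q: "\<And>y. norm (y - x) < 1 \<Longrightarrow> \<bar>f y - f x - D (y - x)\<bar> \<le> C * (norm (y - x))\<^sup>2"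
  shows "(f has_derivative D) (at x)"
  unfolding has_derivative_iff_norm
proof (intro conjI bl)
  show "((\<lambda>y. norm (f y - f x - D (y - x)) / norm (y - x)) \<longlongrightarrow> 0) (at x)"
  proof (rule tendsto_sandwich[where f="\<lambda>_. 0" and h="\<lambda>y. \<bar>C\<bar> * norm (y - x)"])
    show "\<forall>\<^sub>F y in at x. 0 \<le> norm (f y - f x - D (y - x)) / norm (y - x)" by simp
    have "\<forall>\<^sub>F y in at x. y \<in> ball x 1" by (rule eventually_at_in_open') auto
    then show "\<forall>\<^sub>F y in at x. norm (f y - f x - D (y - x)) / norm (y - x) \<le> \<bar>C\<bar> * norm (y - x)"
    proof (rule eventually_mono)
      fix y assume "y \<in> ball x 1"
      then have y: "norm (y - x) < 1" by (simp add: dist_norm norm_minus_commute)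
      have "norm (f y - f x - D (y - x)) \<le> \<bar>C\<bar> * (norm (y - x))\<^sup>2"
        using q[OF y] by (simp add: order_trans[OF _ mult_right_mono[OF abs_ge_self]])
      then show "norm (f y - f x - D (y - x)) / norm (y - x) \<le> \<bar>C\<bar> * norm (y - x)"
        by (cases "y = x") (auto simp: divide_le_eq power2_eq_square mult.assoc)
    qed
    show "((\<lambda>_. 0) \<longlongrightarrow> 0) (at x)" by simp
    have "((\<lambda>y. \<bar>C\<bar> * norm (y - x)) \<longlongrightarrow> \<bar>C\<bar> * norm (x - x)) (at x)"
      by (intro tendsto_intros)
    then show "((\<lambda>y. \<bar>C\<bar> * norm (y - x)) \<longlongrightarrow> 0) (at x)" by simp
  qed
qed

lemma phi_deriv:
  fixes U L :: "real^'p^'p" and a v0 :: "real^'p"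
  assumes U: "orthogonal_matrix U" and Ld: "\<forall>i j. i \<noteq> j \<longrightarrow> L $ i $ j = 0"
    and Lp: "\<forall>i. L $ i $ i \<ge> 0" and t: "0 \<le> t"
  shows "((\<lambda>v. Kf (a \<bullet> v) (t * qf L v)) has_derivative
     (\<lambda>h. (Kcf (a \<bullet> v0) (t * qf L v0) *\<^sub>R a
            + (t * kf (a \<bullet> v0) (t * qf L v0)) *\<^sub>R (2 *\<^sub>R (L *v v0))) \<bullet> h)) (at v0)"
proof -
  define c0 where "c0 = a \<bullet> v0"
  define T0 where "T0 = t * qf L v0"
  define lam where "lam = lamf U L"
  define g where "g = Kcf c0 T0 *\<^sub>R a + (t * kf c0 T0) *\<^sub>R (2 *\<^sub>R (L *v v0))"
  have lam0: "0 \<le> lam" unfolding lam_def by (rule lam_nonneg)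
  have T0: "0 \<le> T0" unfolding T0_def using t qf_nonneg[OF Ld Lp] by simp
  define M where "M = t * (2 * norm (L *v v0) + lam)"
  have M0: "0 \<le> M" unfolding M_def using t lam0 by simp
  have basic: "\<bar>a \<bullet> h\<bar> \<le> norm a * norm h"
      "0 \<le> qf L h" "qf L h \<le> lam * (norm h)\<^sup>2"
      "\<bar>(L *v v0) \<bullet> h\<bar> \<le> norm (L *v v0) * norm h" for h
    using Cauchy_Schwarz_ineq2 qf_nonneg[OF Ld Lp] qf_le_lam[OF U] unfolding lam_def by auto
  have Texp: "t * qf L (v0 + h) = T0 + t * (2 * ((L *v v0) \<bullet> h) + qf L h)" for h
    unfolding T0_def qf_add[OF Ld] by (simp add: algebra_simps)
  have TM: "\<bar>t * (2 * ((L *v v0) \<bullet> h) + qf L h)\<bar> \<le> M * norm h" if h: "norm h < 1" for h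
  proof -
    have "(norm h)\<^sup>2 \<le> norm h" using h mult_left_le_one_le[of "norm h" "norm h"] by (simp add: power2_eq_square)
    then have "qf L h \<le> lam * norm h" using basic(3)[of h] lam0 by (meson mult_left_mono order_trans)
    then have "\<bar>2 * ((L *v v0) \<bullet> h) + qf L h\<bar> \<le> 2 * (norm (L *v v0) * norm h) + lam * norm h"
      using basic(2,4)[of h] by linarith
    then have "\<bar>t * (2 * ((L *v v0) \<bullet> h) + qf L h)\<bar> \<le> t * (2 * (norm (L *v v0) * norm h) + lam * norm h)"
      using t by (simp add: abs_mult mult_left_mono)
    then show ?thesis unfolding M_def by (simp add: algebra_simps)
  qed
  show ?thesis
    unfolding c0_def[symmetric] T0_def[symmetric] g_def[symmetric]
  proof (cases "T0 = 0")
    case True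
    have tL: "t *\<^sub>R (L *v v0) = 0"
    proof (cases "t = 0")
      case False
      then have "qf L v0 = 0" using True unfolding T0_def by simp
      then have "(norm (L *v v0))\<^sup>2 \<le> 0" using Lnorm_sq_le[OF U Ld Lp, of v0] by simp
      then show ?thesis by simp
    qed simp
    have "(t * kf c0 T0) *\<^sub>R (2 *\<^sub>R (L *v v0)) = (2 * kf c0 T0) *\<^sub>R (t *\<^sub>R (L *v v0))"
      by (simp add: mult_ac)
    then have g0: "g = 0" unfolding g_def True using tL by simp
    have tl2: "t * ((L *v v0) \<bullet> h) = 0" for h using tL
      by (metis inner_scaleR_left inner_zero_left)
    show "((\<lambda>v. Kf (a \<bullet> v) (t * qf L v)) has_derivative (\<lambda>h. g \<bullet> h)) (at v0)"
    proof (rule has_derivative_quad[where C="t * lam / 4"])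
      show "bounded_linear (\<lambda>h. g \<bullet> h)" by (rule bounded_linear_inner_right)
      fix v assume "norm (v - v0) < 1"
      define h where "h = v - v0"
      have v: "v = v0 + h" unfolding h_def by simp
      have Tv: "t * qf L v = t * qf L h" unfolding v Texp True using tl2[of h] by (simp add: algebra_simps)
      have "\<bar>Kf (a \<bullet> v) (t * qf L v)\<bar> \<le> t * qf L v / 4"
        by (rule Kf_bound) (use t qf_nonneg[OF Ld Lp] in simp)
      also have "\<dots> \<le> t * (lam * (norm h)\<^sup>2) / 4"
        unfolding Tv using basic(3)[of h] t by (simp add: mult_left_mono)
      finally have "\<bar>Kf (a \<bullet> v) (t * qf L v)\<bar> \<le> t * (lam * (norm h)\<^sup>2) / 4" .
      then show "\<bar>Kf (a \<bullet> v) (t * qf L v) - Kf (a \<bullet> v0) (t * qf L v0) - g \<bullet> (v - v0)\<bar>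
          \<le> t * lam / 4 * (norm (v - v0))\<^sup>2"
      proof -
        assume that: "\<bar>Kf (a \<bullet> v) (t * qf L v)\<bar> \<le> t * (lam * (norm h)\<^sup>2) / 4"
        have z: "Kf (a \<bullet> v0) (t * qf L v0) = 0" using True Kf_0 unfolding T0_def by metis
        show ?thesis using that unfolding z g0 h_def by simp
      qed
    qed
  next
    case False
    then have T0p: "0 < T0" using T0 by simp
    define C where "C = M\<^sup>2 * m1 / (4 * sqrt T0) + M * norm a / 4 + T0 * (norm a)\<^sup>2 / 4 + t * lam / 4"
    show "((\<lambda>v. Kf (a \<bullet> v) (t * qf L v)) has_derivative (\<lambda>h. g \<bullet> h)) (at v0)"
    proof (rule has_derivative_quad[where C=C])
      show "bounded_linear (\<lambda>h. g \<bullet> h)" by (rule bounded_linear_inner_right)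
      fix v assume hv: "norm (v - v0) < 1"
      define h where "h = v - v0"
      have h1: "norm h < 1" using hv unfolding h_def .
      have v: "v = v0 + h" unfolding h_def by simp
      define c where "c = a \<bullet> v"
      define T where "T = t * qf L v"
      define dT where "dT = t * (2 * ((L *v v0) \<bullet> h) + qf L h)"
      have cc: "c - c0 = a \<bullet> h" unfolding c_def c0_def v by (simp add: inner_add_right)
      have TT: "T - T0 = dT" unfolding T_def dT_def v Texp by simp
      have Tnn: "0 \<le> T" unfolding T_def using t qf_nonneg[OF Ld Lp] by simp
      have dTb: "\<bar>dT\<bar> \<le> M * norm h" unfolding dT_def by (rule TM[OF h1])
      have chb: "\<bar>c - c0\<bar> \<le> norm a * norm h" unfolding cc by (rule basic(1))
      define X1 where "X1 = Kf c T - Kf c T0 - (T - T0) * kf c T0"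
      define X2 where "X2 = (T - T0) * (kf c T0 - kf c0 T0)"
      define X3 where "X3 = Kf c T0 - Kf c0 T0 - (c - c0) * Kcf c0 T0"
      define X4 where "X4 = t * kf c0 T0 * qf L h"
      have gh: "g \<bullet> h = Kcf c0 T0 * (a \<bullet> h) + t * kf c0 T0 * (2 * ((L *v v0) \<bullet> h))"
        unfolding g_def by (simp add: inner_add_left)
      have TT': "T - T0 = t * (2 * ((L *v v0) \<bullet> h) + qf L h)" using TT unfolding dT_def .
      have split: "Kf c T - Kf c0 T0 - g \<bullet> h = X1 + X2 + X3 + X4"
        unfolding X1_def X2_def X3_def X4_def gh TT' cc
        by (simp add: algebra_simps)
      have b1: "\<bar>X1\<bar> \<le> M\<^sup>2 * m1 / (4 * sqrt T0) * (norm h)\<^sup>2"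
      proof -
        have "\<bar>X1\<bar> \<le> (T - T0)\<^sup>2 * m1 / (4 * sqrt T0)"
          unfolding X1_def by (rule Kf_taylor_T[OF T0p Tnn])
        also have "(T - T0)\<^sup>2 \<le> (M * norm h)\<^sup>2"
        proof -
          have "\<bar>T - T0\<bar> \<le> M * norm h" using dTb TT by simp
          then have "\<bar>T - T0\<bar>\<^sup>2 \<le> (M * norm h)\<^sup>2" by (rule power_mono) simp
          then show ?thesis by simp
        qed
        then have "(T - T0)\<^sup>2 * m1 / (4 * sqrt T0) \<le> (M * norm h)\<^sup>2 * m1 / (4 * sqrt T0)"
          using m1_nonneg T0p by (intro divide_right_mono mult_right_mono) auto
        finally show ?thesis by (simp add: power_mult_distrib mult_ac)
      qed
      have b2: "\<bar>X2\<bar> \<le> M * norm a / 4 * (norm h)\<^sup>2"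
      proof -
        have k: "\<bar>kf c T0 - kf c0 T0\<bar> \<le> 1/4 * \<bar>c - c0\<bar>"
          unfolding kf_def using sd.GI_lip[of c "sqrt T0" c0 "sqrt T0"] by simp
        have "\<bar>X2\<bar> = \<bar>T - T0\<bar> * \<bar>kf c T0 - kf c0 T0\<bar>" unfolding X2_def by (simp add: abs_mult)
        also have "\<dots> \<le> (M * norm h) * (1/4 * (norm a * norm h))"
          using dTb k chb unfolding TT by (intro mult_mono) auto
        finally show ?thesis by (simp add: power2_eq_square algebra_simps)
      qed
      have b3: "\<bar>X3\<bar> \<le> T0 * (norm a)\<^sup>2 / 4 * (norm h)\<^sup>2"
      proof -
        have "\<bar>X3\<bar> \<le> T0 * (c - c0)\<^sup>2 / 4"
          unfolding X3_def using Kf_taylor_c[OF T0, of c0 "c - c0"] by simp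
        also have "(c - c0)\<^sup>2 \<le> (norm a * norm h)\<^sup>2"
          using chb by (metis abs_ge_zero abs_le_square_iff abs_of_nonneg norm_ge_zero zero_le_mult_iff)
        then have "T0 * (c - c0)\<^sup>2 / 4 \<le> T0 * (norm a * norm h)\<^sup>2 / 4"
          using T0 by (intro divide_right_mono mult_left_mono) auto
        finally show ?thesis by (simp add: power_mult_distrib)
      qed
      have b4: "\<bar>X4\<bar> \<le> t * lam / 4 * (norm h)\<^sup>2"
      proof -
        have "\<bar>X4\<bar> = t * \<bar>kf c0 T0\<bar> * qf L h" unfolding X4_def using t basic(2)[of h] by (simp add: abs_mult)
        also have "\<dots> \<le> t * (1/4) * (lam * (norm h)\<^sup>2)"
          using t basic(2,3)[of h] kf_bound[of c0 T0] by (intro mult_mono) auto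
        finally show ?thesis by simp
      qed
      have "\<bar>Kf c T - Kf c0 T0 - g \<bullet> h\<bar> \<le> C * (norm h)\<^sup>2"
      proof -
        have e: "C * (norm h)\<^sup>2 = M\<^sup>2 * m1 / (4 * sqrt T0) * (norm h)\<^sup>2 + M * norm a / 4 * (norm h)\<^sup>2
            + T0 * (norm a)\<^sup>2 / 4 * (norm h)\<^sup>2 + t * lam / 4 * (norm h)\<^sup>2"
          unfolding C_def by (simp add: algebra_simps)
        have "\<bar>X1 + X2 + X3 + X4\<bar> \<le> \<bar>X1\<bar> + \<bar>X2\<bar> + \<bar>X3\<bar> + \<bar>X4\<bar>" by arith
        then show ?thesis unfolding split e using b1 b2 b3 b4 by linarith
      qed
      then show "\<bar>Kf (a \<bullet> v) (t * qf L v) - Kf (a \<bullet> v0) (t * qf L v0) - g \<bullet> (v - v0)\<bar> \<le> C * (norm (v - v0))\<^sup>2"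
        unfolding c_def T_def c0_def T0_def h_def .
    qed
  qed
qed

theorem lemma3_deriv:
  fixes U L :: "real^'p::finite^'p"
    and M :: "'a measure"
    and Z :: "'n::finite \<Rightarrow> 'a \<Rightarrow> real^'p"
    and t :: real
    and \<theta> :: "real^'p"
    and z :: "real^'p^'n"
  assumes U_orth: "orthogonal_matrix U"
    and L_diag: "\<forall>i j. i \<noteq> j \<longrightarrow> L $ i $ j = 0"
    and L_psd: "\<forall>i. L $ i $ i \<ge> 0"
    and t_pos: "t > 0"
  shows "((\<lambda>y. G_fun U L M Z t \<theta> y) has_derivative (\<lambda>h. (\<chi> i. (1 / (2 * real CARD('n))) *\<^sub>R
      (Kcf (av U L \<theta> \<bullet> z $ i) (t * qf L (z $ i)) *\<^sub>R av U L \<theta>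
       + (t * kf (av U L \<theta> \<bullet> z $ i) (t * qf L (z $ i))) *\<^sub>R (2 *\<^sub>R (L *v z $ i)))) \<bullet> h)) (at z)"
proof -
  define n where "n = real CARD('n)"
  define a where "a = av U L \<theta>"
  define gi where "gi i = Kcf (a \<bullet> z $ i) (t * qf L (z $ i)) *\<^sub>R a
       + (t * kf (a \<bullet> z $ i) (t * qf L (z $ i))) *\<^sub>R (2 *\<^sub>R (L *v z $ i))" for i
  define Cst where "Cst = 1 / (2 * n) * (\<Sum>i\<in>UNIV.
        (LINT s:{0..t}|lborel.
           (\<integral>\<omega>. (\<integral>g. sigmoid_deriv (Wtilde U L \<theta> (sqrt s *\<^sub>R g) \<bullet> Z i \<omega>)
                      * ((L *v Z i \<omega>) \<bullet> Z i \<omega>) \<partial>std_gauss) \<partial>M)))"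
  have t0: "0 \<le> t" using t_pos by simp
  have Geq: "G_fun U L M Z t \<theta> y = 1 / (2 * n) * (\<Sum>i\<in>UNIV. Kf (a \<bullet> y $ i) (t * qf L (y $ i))) - Cst" for y
    unfolding G_fun_def Cst_def n_def a_def using Fi_eq[OF U_orth L_diag L_psd t0] by simp
  have d1: "((\<lambda>y. Kf (a \<bullet> y $ i) (t * qf L (y $ i))) has_derivative (\<lambda>h. gi i \<bullet> h $ i)) (at z)" for i
    using has_derivative_compose[OF bounded_linear_imp_has_derivative[OF bounded_linear_vec_nth[of i]]
        phi_deriv[OF U_orth L_diag L_psd t0, of a "z $ i"]]
    unfolding gi_def .
  have "((\<lambda>y. 1 / (2 * n) * (\<Sum>i\<in>UNIV. Kf (a \<bullet> y $ i) (t * qf L (y $ i))) - Cst) has_derivative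
      (\<lambda>h. 1 / (2 * n) * (\<Sum>i\<in>UNIV. gi i \<bullet> h $ i) - 0)) (at z)"
    by (intro has_derivative_diff has_derivative_mult_right has_derivative_sum d1 has_derivative_const)
  then have "((\<lambda>y. G_fun U L M Z t \<theta> y) has_derivative
      (\<lambda>h. (\<chi> i. (1 / (2 * n)) *\<^sub>R gi i) \<bullet> h)) (at z)"
    unfolding Geq[abs_def]
    by (rule has_derivative_eq_rhs) (simp add: inner_vec_def sum_distrib_left)
  then show ?thesis unfolding n_def gi_def a_def .
qed

lemma sq_le_sqrt: assumes "0 \<le> x" "0 \<le> y" "x\<^sup>2 \<le> y" shows "x \<le> sqrt y"
  using assms real_le_rsqrt by blast

lemma grad_bound:
  fixes U L :: "real^'p::finite^'p" and z :: "real^'p^'n::finite" and \<theta> :: "real^'p"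
  assumes U: "orthogonal_matrix U" and Ld: "\<forall>i j. i \<noteq> j \<longrightarrow> L $ i $ j = 0"
    and Lp: "\<forall>i. L $ i $ i \<ge> 0" and t_pos: "t > 0" and R: "R \<ge> 0" and th: "norm \<theta> \<le> R"
  shows "norm (\<chi> i. (1 / (2 * real CARD('n))) *\<^sub>R
      (Kcf (av U L \<theta> \<bullet> z $ i) (t * qf L (z $ i)) *\<^sub>R av U L \<theta>
       + (t * kf (av U L \<theta> \<bullet> z $ i) (t * qf L (z $ i))) *\<^sub>R (2 *\<^sub>R (L *v z $ i))))
    \<le> sqrt (2 * t * lamf U L / (pi * real CARD('n)))
       * (4 + sqrt (R\<^sup>2 / (16 * real CARD('n)) * (\<Sum>i\<in>UNIV. (L *v z $ i) \<bullet> z $ i)))"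
proof -
  define n where "n = real CARD('n)"
  have n: "0 < n" unfolding n_def by simp
  define lam where "lam = lamf U L"
  have lam: "0 \<le> lam" unfolding lam_def by (rule lam_nonneg)
  define a where "a = av U L \<theta>"
  define q where "q i = qf L (z $ i)" for i
  have q: "0 \<le> q i" for i unfolding q_def by (rule qf_nonneg[OF Ld Lp])
  have qe: "(L *v z $ i) \<bullet> z $ i = q i" for i unfolding q_def qf_def ..
  define c where "c i = a \<bullet> z $ i" for i
  have t: "0 \<le> t" using t_pos by simp
  define A where "A = (\<chi> i. (1 / (2 * n)) *\<^sub>R (Kcf (c i) (t * q i) *\<^sub>R a))"
  define B where "B = (\<chi> i. (1 / (2 * n)) *\<^sub>R ((t * kf (c i) (t * q i)) *\<^sub>R (2 *\<^sub>R (L *v z $ i))))"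
  have vec: "(\<chi> i. (1 / (2 * real CARD('n))) *\<^sub>R
      (Kcf (av U L \<theta> \<bullet> z $ i) (t * qf L (z $ i)) *\<^sub>R av U L \<theta>
       + (t * kf (av U L \<theta> \<bullet> z $ i) (t * qf L (z $ i))) *\<^sub>R (2 *\<^sub>R (L *v z $ i)))) = A + B"
    unfolding A_def B_def n_def a_def c_def q_def by (simp add: vec_eq_iff scaleR_add_right)
  have na: "norm a \<le> sqrt lam * R"
  proof -
    have "(norm a)\<^sup>2 \<le> lam * (norm \<theta>)\<^sup>2" unfolding a_def lam_def by (rule av_norm_sq[OF U Ld Lp])
    also have "\<dots> \<le> lam * R\<^sup>2" using th lam by (intro mult_left_mono power_mono) auto
    finally have "norm a \<le> sqrt (lam * R\<^sup>2)" by (intro sq_le_sqrt) (use lam in auto)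
    then show ?thesis using R by (simp add: real_sqrt_mult)
  qed
  define CA where "CA = 1 / (2 * n) * (sqrt lam * R) * sqrt (t / (2 * pi))"
  have CA: "0 \<le> CA" unfolding CA_def using n lam R t by simp
  have nA: "norm A \<le> CA * sqrt (\<Sum>i\<in>UNIV. q i)"
  proof -
    have "norm A = L2_set (\<lambda>i. norm (A $ i)) UNIV" by (simp add: norm_vec_def)
    also have "\<dots> \<le> L2_set (\<lambda>i. CA * sqrt (q i)) UNIV"
    proof (rule L2_set_mono)
      fix i
      have kc: "\<bar>Kcf (c i) (t * q i)\<bar> \<le> sqrt (t / (2 * pi)) * sqrt (q i)"
        using Kcf_bound[of "t * q i" "c i"] t q[of i]
        by (simp add: real_sqrt_mult real_sqrt_divide)
      have "norm (A $ i) = 1 / (2 * n) * (\<bar>Kcf (c i) (t * q i)\<bar> * norm a)"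
        unfolding A_def using n by simp
      also have "\<dots> \<le> 1 / (2 * n) * ((sqrt (t / (2 * pi)) * sqrt (q i)) * (sqrt lam * R))"
        using kc na n by (intro mult_left_mono mult_mono) auto
      also have "\<dots> = CA * sqrt (q i)" unfolding CA_def by (simp add: algebra_simps)
      finally show "norm (A $ i) \<le> CA * sqrt (q i)" .
    qed simp
    also have "\<dots> = CA * L2_set (\<lambda>i. sqrt (q i)) UNIV"
      by (rule L2_set_right_distrib[OF CA, symmetric])
    also have "L2_set (\<lambda>i. sqrt (q i)) UNIV = sqrt (\<Sum>i\<in>UNIV. q i)"
      unfolding L2_set_def using q by simp
    finally show ?thesis .
  qed
  define \<beta> where "\<beta> = 1 / (2 * n) * (2 * (sqrt t * sqrt lam / sqrt (2 * pi)))"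
  have nB: "norm B \<le> sqrt n * \<beta>"
  proof -
    have "norm B = L2_set (\<lambda>i. norm (B $ i)) UNIV" by (simp add: norm_vec_def)
    also have "\<dots> \<le> L2_set (\<lambda>i. \<beta>) (UNIV :: 'n set)"
    proof (rule L2_set_mono)
      fix i
      have "t * \<bar>kf (c i) (t * q i)\<bar> * norm (L *v z $ i) \<le> sqrt t * sqrt lam / sqrt (2 * pi)"
      proof (cases "q i = 0")
        case True
        then have "(norm (L *v z $ i))\<^sup>2 \<le> 0"
          using Lnorm_sq_le[OF U Ld Lp, of "z $ i"] unfolding q_def lam_def by simp
        then have "norm (L *v z $ i) = 0" by simp
        then show ?thesis using lam t by simp
      next
        case False
        then have qp: "0 < q i" using q[of i] by simp
        have "(norm (L *v z $ i))\<^sup>2 \<le> lam * q i"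
          using Lnorm_sq_le[OF U Ld Lp, of "z $ i"] unfolding q_def lam_def .
        then have "norm (L *v z $ i) \<le> sqrt (lam * q i)"
          by (rule sq_le_sqrt[rotated 2]) (use lam q[of i] in auto)
        then have L1: "norm (L *v z $ i) \<le> sqrt lam * sqrt (q i)"
          by (simp add: real_sqrt_mult)
        have k1: "\<bar>kf (c i) (t * q i)\<bar> \<le> 1 / (sqrt (t * q i) * sqrt (2 * pi))"
          by (rule kf_decay) (use t_pos qp in simp)
        have "t * \<bar>kf (c i) (t * q i)\<bar> * norm (L *v z $ i)
            \<le> t * (1 / (sqrt (t * q i) * sqrt (2 * pi))) * (sqrt lam * sqrt (q i))"
          by (rule mult_mono[OF mult_left_mono[OF k1 t] L1]) (use t qp in auto)
        also have "\<dots> = sqrt t * sqrt lam / sqrt (2 * pi)"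
        proof -
          have st: "0 < sqrt t" "0 < sqrt (q i)" "0 < sqrt (2 * pi)" using t_pos qp by auto
          have "t * (1 / (sqrt (t * q i) * sqrt (2 * pi))) * (sqrt lam * sqrt (q i))
              = (sqrt t * sqrt t) * sqrt lam * sqrt (q i) / (sqrt t * sqrt (q i) * sqrt (2 * pi))"
            using t by (simp add: real_sqrt_mult)
          also have "\<dots> = sqrt t * sqrt lam / sqrt (2 * pi)"
            using st by (simp add: field_simps)
          finally show ?thesis .
        qed
        finally show ?thesis .
      qed
      then have key: "2 * (t * \<bar>kf (c i) (t * q i)\<bar> * norm (L *v z $ i)) \<le> 2 * (sqrt t * sqrt lam / sqrt (2 * pi))"
        by simp
      have "norm (B $ i) = 1 / (2 * n) * (2 * (t * \<bar>kf (c i) (t * q i)\<bar> * norm (L *v z $ i)))"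
        unfolding B_def using n t by (simp add: abs_mult)
      also have "\<dots> \<le> 1 / (2 * n) * (2 * (sqrt t * sqrt lam / sqrt (2 * pi)))"
        by (rule mult_left_mono[OF key]) (use n in simp)
      finally show "norm (B $ i) \<le> \<beta>" unfolding \<beta>_def .
    qed simp
    also have "L2_set (\<lambda>i. \<beta>) (UNIV :: 'n set) = sqrt n * \<beta>"
    proof -
      have b: "0 \<le> \<beta>" unfolding \<beta>_def using n t lam by simp
      have "L2_set (\<lambda>i. \<beta>) (UNIV :: 'n set) = sqrt (n * \<beta>\<^sup>2)" unfolding L2_set_def n_def by simp
      also have "\<dots> = sqrt n * \<beta>" using b n by (simp add: real_sqrt_mult)
      finally show ?thesis .
    qed
    finally show ?thesis .
  qed
  define S where "S = sqrt (2 * t * lam / (pi * n))"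
  have S: "0 \<le> S" unfolding S_def using t lam n by simp
  have sq: "0 \<le> (\<Sum>i\<in>UNIV. q i)" using q by (simp add: sum_nonneg)
  have b2: "\<beta>\<^sup>2 = t * lam / (2 * pi * n\<^sup>2)"
  proof -
    have "\<beta> = sqrt t * sqrt lam / (n * sqrt (2 * pi))" unfolding \<beta>_def using n by simp
    then have "\<beta>\<^sup>2 = (sqrt t)\<^sup>2 * (sqrt lam)\<^sup>2 / (n\<^sup>2 * (sqrt (2 * pi))\<^sup>2)"
      by (simp add: power_mult_distrib power_divide)
    then show ?thesis using t lam by simp
  qed
  have f1: "sqrt n * \<beta> \<le> 4 * S"
  proof (rule power2_le_imp_le)
    show "0 \<le> 4 * S" using S by simp
    have "(sqrt n * \<beta>)\<^sup>2 = n * \<beta>\<^sup>2" using n by (simp add: power_mult_distrib)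
    also have "\<dots> = t * lam / (2 * pi * n)" unfolding b2 using n by (simp add: power2_eq_square)
    also have "\<dots> \<le> 16 * (2 * t * lam / (pi * n))"
      using n t lam by (simp add: divide_simps)
    also have "\<dots> = (4 * S)\<^sup>2"
      unfolding S_def using n t lam by (simp add: power_mult_distrib)
    finally show "(sqrt n * \<beta>)\<^sup>2 \<le> (4 * S)\<^sup>2" .
  qed
  have f2: "CA * sqrt (\<Sum>i\<in>UNIV. q i) \<le> S * sqrt (R\<^sup>2 / (16 * n) * (\<Sum>i\<in>UNIV. q i))"
  proof (rule power2_le_imp_le)
    show "0 \<le> S * sqrt (R\<^sup>2 / (16 * n) * (\<Sum>i\<in>UNIV. q i))" using S n sq by simp
    have CA2: "CA\<^sup>2 = (1 / (2 * n))\<^sup>2 * lam * R\<^sup>2 * (t / (2 * pi))"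
      unfolding CA_def using lam t by (simp add: power_mult_distrib power_divide)
    have S2: "S\<^sup>2 = 2 * t * lam / (pi * n)"
      unfolding S_def using t lam n by simp
    have "(CA * sqrt (\<Sum>i\<in>UNIV. q i))\<^sup>2 = CA\<^sup>2 * (\<Sum>i\<in>UNIV. q i)"
      using sq by (simp add: power_mult_distrib)
    also have "\<dots> = S\<^sup>2 * (R\<^sup>2 / (16 * n) * (\<Sum>i\<in>UNIV. q i))"
      unfolding CA2 S2 using n by (simp add: power2_eq_square field_simps)
    also have "\<dots> = (S * sqrt (R\<^sup>2 / (16 * n) * (\<Sum>i\<in>UNIV. q i)))\<^sup>2"
      using sq n by (simp add: power_mult_distrib)
    finally show "(CA * sqrt (\<Sum>i\<in>UNIV. q i))\<^sup>2 \<le> (S * sqrt (R\<^sup>2 / (16 * n) * (\<Sum>i\<in>UNIV. q i)))\<^sup>2"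
      by simp
  qed
  have "norm (A + B) \<le> norm A + norm B" by (rule norm_triangle_ineq)
  also have "\<dots> \<le> S * (4 + sqrt (R\<^sup>2 / (16 * n) * (\<Sum>i\<in>UNIV. q i)))"
    using nA nB f1 f2 by (simp add: distrib_left)
  finally show ?thesis unfolding vec S_def lam_def n_def qe .
qed


theorem lemma3:
  fixes U L :: "real^'p::finite^'p"
    and M :: "'a measure"
    and Z :: "'n::finite \<Rightarrow> 'a \<Rightarrow> real^'p"
    and R K t :: real
    and \<theta> :: "real^'p"
    and z :: "real^'p^'n"
  assumes U_orth: "orthogonal_matrix U"
    and L_diag: "\<forall>i j. i \<noteq> j \<longrightarrow> L $ i $ j = 0"
    and L_psd: "\<forall>i. L $ i $ i \<ge> 0"
    and R_nonneg: "R \<ge> 0"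
    and M_prob: "prob_space M"
    and Z_meas: "\<forall>i. Z i \<in> borel_measurable M"
    and Z_indep: "prob_space.indep_vars M (\<lambda>_. borel) Z UNIV"
    and Z_ident: "\<forall>i j. distr M borel (Z i) = distr M borel (Z j)"
    and Z_second_moment: "\<forall>i j k. integrable M (\<lambda>\<omega>. Z i \<omega> $ j * Z i \<omega> $ k) \<and>
                     (\<integral>\<omega>. Z i \<omega> $ j * Z i \<omega> $ k \<partial>M) = (if j = k then 1 else 0)"
    and K_pos: "K > 0"
    and Z_conc: "concentration_property M (\<lambda>\<omega>. (\<chi> i. Z i \<omega>) :: real^'p^'n) K"
    and t_pos: "t > 0"
    and theta_ball: "norm \<theta> \<le> R"
  shows "\<exists>g :: real^'p^'n.
           ((\<lambda>y. G_fun U L M Z t \<theta> y) has_derivative (\<lambda>h. g \<bullet> h)) (at z) \<and>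
           norm g \<le> sqrt (2 * t * onorm (\<lambda>x. (U ** L ** transpose U) *v x) / (pi * real CARD('n)))
                    * (4 + sqrt (R\<^sup>2 / (16 * real CARD('n)) * (\<Sum>i\<in>UNIV. (L *v z $ i) \<bullet> z $ i)))"
proof -
  have d: "((\<lambda>y. G_fun U L M Z t \<theta> y) has_derivative (\<lambda>h. (\<chi> i. (1 / (2 * real CARD('n))) *\<^sub>R
      (Kcf (av U L \<theta> \<bullet> z $ i) (t * qf L (z $ i)) *\<^sub>R av U L \<theta>
       + (t * kf (av U L \<theta> \<bullet> z $ i) (t * qf L (z $ i))) *\<^sub>R (2 *\<^sub>R (L *v z $ i)))) \<bullet> h)) (at z)"
    by (rule lemma3_deriv[OF U_orth L_diag L_psd t_pos])
  have b: "norm (\<chi> i. (1 / (2 * real CARD('n))) *\<^sub>R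
      (Kcf (av U L \<theta> \<bullet> z $ i) (t * qf L (z $ i)) *\<^sub>R av U L \<theta>
       + (t * kf (av U L \<theta> \<bullet> z $ i) (t * qf L (z $ i))) *\<^sub>R (2 *\<^sub>R (L *v z $ i))))
    \<le> sqrt (2 * t * lamf U L / (pi * real CARD('n)))
       * (4 + sqrt (R\<^sup>2 / (16 * real CARD('n)) * (\<Sum>i\<in>UNIV. (L *v z $ i) \<bullet> z $ i)))"
    by (rule grad_bound[OF U_orth L_diag L_psd t_pos R_nonneg theta_ball])
  show ?thesis using d b unfolding lamf_def by blast
qed

end
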